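(* Let $K$ be a non-archimedean local field. If $n\ge 7$, or $n=6$ and $\mathrm{char}(K)\neq 3$, then every representation (homomorphism) $\rho\colon A_n\to\mathrm{PSL}_2(K)$ of the alternating group $A_n$ lifts to $\mathrm{SL}_2(K)$ (i.e. there is a homomorphism $\bar\rho\colon A_n\to\mathrm{SL}_2(K)$ with $\pi\circ\bar\rho=\rho$, where $\pi\colon\mathrm{SL}_2(K)\to\mathrm{PSL}_2(K)$ is the quotient map), but $H^2(A_n,\mathbb{Z}/2\mathbb{Z})\neq 0$.
   Context: $H^2(A_n,\mathbb{Z}/2\mathbb{Z})$ denotes group cohomology with trivial coefficients. *)

theory Defs
  imports "HOL-Algebra.Sym_Groups" "HOL-Algebra.Coset"
begin

text \<open>A non-archimedean local field: a field complete with respect to a normalized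
discrete valuation v (values only relevant on nonzero elements) whose residue field
O/m is finite.\<close>

definition discrete_valuation :: "('k::field \<Rightarrow> int) \<Rightarrow> bool" where
  "discrete_valuation v \<longleftrightarrow>
     (\<forall>x y. x \<noteq> 0 \<longrightarrow> y \<noteq> 0 \<longrightarrow> v (x * y) = v x + v y) \<and>
     (\<forall>x y. x \<noteq> 0 \<longrightarrow> y \<noteq> 0 \<longrightarrow> x + y \<noteq> 0 \<longrightarrow> v (x + y) \<ge> min (v x) (v y)) \<and>
     (\<forall>n. \<exists>x. x \<noteq> 0 \<and> v x = n)"

definition val_ring :: "('k::field \<Rightarrow> int) \<Rightarrow> 'k set" where
  "val_ring v = {x. x = 0 \<or> v x \<ge> 0}"

definition val_ideal :: "('k::field \<Rightarrow> int) \<Rightarrow> 'k set" where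
  "val_ideal v = {x. x = 0 \<or> v x > 0}"

definition residue_rel :: "('k::field \<Rightarrow> int) \<Rightarrow> ('k \<times> 'k) set" where
  "residue_rel v = {(x, y). x \<in> val_ring v \<and> y \<in> val_ring v \<and> x - y \<in> val_ideal v}"

text \<open>Convergence / Cauchy property for the valuation topology (|x| = q^(-v x)).\<close>
definition val_cauchy :: "('k::field \<Rightarrow> int) \<Rightarrow> (nat \<Rightarrow> 'k) \<Rightarrow> bool" where
  "val_cauchy v a \<longleftrightarrow> (\<forall>N::int. \<exists>M. \<forall>m\<ge>M. \<forall>n\<ge>M. a m = a n \<or> v (a m - a n) \<ge> N)"

definition val_converges :: "('k::field \<Rightarrow> int) \<Rightarrow> (nat \<Rightarrow> 'k) \<Rightarrow> 'k \<Rightarrow> bool" where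
  "val_converges v a L \<longleftrightarrow> (\<forall>N::int. \<exists>M. \<forall>m\<ge>M. a m = L \<or> v (a m - L) \<ge> N)"

definition nonarch_local_field :: "('k::field \<Rightarrow> int) \<Rightarrow> bool" where
  "nonarch_local_field v \<longleftrightarrow>
     discrete_valuation v \<and>
     (\<forall>a. val_cauchy v a \<longrightarrow> (\<exists>L. val_converges v a L)) \<and>
     finite (val_ring v // residue_rel v)"

datatype 'k mat2 = M2 'k 'k 'k 'k

fun mat2_mult :: "'k::comm_ring_1 mat2 \<Rightarrow> 'k mat2 \<Rightarrow> 'k mat2" where
  "mat2_mult (M2 a b c d) (M2 a' b' c' d') =
     M2 (a * a' + b * c') (a * b' + b * d') (c * a' + d * c') (c * b' + d * d')"

fun mat2_det :: "'k::comm_ring_1 mat2 \<Rightarrow> 'k" where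
  "mat2_det (M2 a b c d) = a * d - b * c"

definition mat2_id :: "'k::comm_ring_1 mat2" where
  "mat2_id = M2 1 0 0 1"

definition mat2_negid :: "'k::comm_ring_1 mat2" where
  "mat2_negid = M2 (-1) 0 0 (-1)"

definition SL2 :: "'k::field itself \<Rightarrow> 'k mat2 monoid" where
  "SL2 _ = \<lparr>carrier = {A. mat2_det A = 1}, mult = mat2_mult, one = mat2_id\<rparr>"

definition PSL2 :: "'k::field itself \<Rightarrow> 'k mat2 set monoid" where
  "PSL2 K = SL2 K Mod {mat2_id, mat2_negid}"

definition PSL2_proj :: "'k::field itself \<Rightarrow> 'k mat2 \<Rightarrow> 'k mat2 set" where
  "PSL2_proj K A = {mat2_id, mat2_negid} #>\<^bsub>SL2 K\<^esub> A"

text \<open>Z/2Z is modelled as bool with addition = exclusive or (\<noteq>).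
Inhomogeneous 2-cochains are functions G x G -> Z/2Z (extensional: False outside carrier).\<close>

definition cocycles2_Z2 :: "('g, 'm) monoid_scheme \<Rightarrow> ('g \<Rightarrow> 'g \<Rightarrow> bool) set" where
  "cocycles2_Z2 G = {f.
     (\<forall>x y. (x \<notin> carrier G \<or> y \<notin> carrier G) \<longrightarrow> \<not> f x y) \<and>
     (\<forall>g\<in>carrier G. \<forall>h\<in>carrier G. \<forall>k\<in>carrier G.
        (f h k \<noteq> f (g \<otimes>\<^bsub>G\<^esub> h) k) = (f g (h \<otimes>\<^bsub>G\<^esub> k) \<noteq> f g h))}"

definition coboundaries2_Z2 :: "('g, 'm) monoid_scheme \<Rightarrow> ('g \<Rightarrow> 'g \<Rightarrow> bool) set" where
  "coboundaries2_Z2 G = {f. \<exists>c :: 'g \<Rightarrow> bool.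
     f = (\<lambda>g h. if g \<in> carrier G \<and> h \<in> carrier G
                then (c h \<noteq> c (g \<otimes>\<^bsub>G\<^esub> h)) \<noteq> c g else False)}"

definition H2_Z2_nonzero :: "('g, 'm) monoid_scheme \<Rightarrow> bool" where
  "H2_Z2_nonzero G \<longleftrightarrow> (\<exists>f \<in> cocycles2_Z2 G. f \<notin> coboundaries2_Z2 G)"

end

theory Submission
  imports Defs Complex_Main
begin

fun mneg :: "'k::comm_ring_1 mat2 \<Rightarrow> 'k mat2" where
  "mneg (M2 a b c d) = M2 (-a) (-b) (-c) (-d)"

lemma mat2_mult_assoc: "mat2_mult (mat2_mult A B) C = mat2_mult A (mat2_mult B C)"
  by (cases A; cases B; cases C) (simp add: algebra_simps)

lemma mat2_det_mult: "mat2_det (mat2_mult A B) = mat2_det A * mat2_det B"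
  by (cases A; cases B) (simp add: algebra_simps)

lemma mat2_id_mult[simp]: "mat2_mult mat2_id A = A" "mat2_mult A mat2_id = A"
  by (cases A; simp add: mat2_id_def)+

lemma mat2_negid_mult[simp]: "mat2_mult mat2_negid A = mneg A" "mat2_mult A mat2_negid = mneg A"
  by (cases A; simp add: mat2_negid_def)+

lemma mneg_mneg[simp]: "mneg (mneg A) = A" by (cases A) simp

lemma mneg_mult[simp]: "mat2_mult (mneg A) B = mneg (mat2_mult A B)" "mat2_mult A (mneg B) = mneg (mat2_mult A B)"
  by (cases A; cases B; simp)+

lemma mneg_det[simp]: "mat2_det (mneg A) = mat2_det A" by (cases A) simp

lemma mat2_det_id[simp]: "mat2_det mat2_id = 1" "mat2_det mat2_negid = 1"
  by (simp_all add: mat2_id_def mat2_negid_def)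

lemma mneg_id[simp]: "mneg mat2_id = mat2_negid" "mneg mat2_negid = mat2_id"
  by (simp_all add: mat2_id_def mat2_negid_def)

lemma SL2_carrier: "carrier (SL2 K) = {A. mat2_det A = 1}" by (simp add: SL2_def)
lemma SL2_mult: "mult (SL2 K) = mat2_mult" by (simp add: SL2_def)
lemma SL2_one: "one (SL2 K) = mat2_id" by (simp add: SL2_def)

lemma SL2_group: "group (SL2 (K::'k::field itself))"
proof (rule groupI)
  fix x assume "x \<in> carrier (SL2 K)"
  then obtain a b c d where x: "x = M2 a b c d" "a*d - b*c = 1" by (cases x) (auto simp: SL2_carrier)
  show "\<exists>y\<in>carrier (SL2 K). y \<otimes>\<^bsub>SL2 K\<^esub> x = \<one>\<^bsub>SL2 K\<^esub>"
    by (rule bexI[of _ "M2 d (-b) (-c) a"]) (use x in \<open>auto simp: SL2_def mat2_id_def algebra_simps\<close>)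
qed (auto simp: SL2_def mat2_det_mult mat2_mult_assoc mat2_det_id)

abbreviation "Zc \<equiv> {mat2_id, mat2_negid}"

lemma Zc_rcos: "Zc #>\<^bsub>SL2 K\<^esub> A = {A, mneg A}"
  by (auto simp: r_coset_def SL2_mult)

lemma Zc_lcos: "A <#\<^bsub>SL2 K\<^esub> Zc = {A, mneg A}"
  by (auto simp: l_coset_def SL2_mult)

lemma Zc_normal: "Zc \<lhd> SL2 (K::'k::field itself)"
proof -
  interpret group "SL2 K" by (rule SL2_group)
  have i1: "inv\<^bsub>SL2 K\<^esub> mat2_negid = mat2_negid"
    by (rule inv_equality) (auto simp: SL2_def)
  have i0: "inv\<^bsub>SL2 K\<^esub> mat2_id = mat2_id"
    by (rule inv_equality) (auto simp: SL2_def)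
  have "subgroup Zc (SL2 K)"
    by (rule subgroupI) (auto simp: SL2_def i1[unfolded SL2_def] i0[unfolded SL2_def])
  moreover have "\<forall>x \<in> carrier (SL2 K). Zc #>\<^bsub>SL2 K\<^esub> x = x <#\<^bsub>SL2 K\<^esub> Zc"
    by (simp add: Zc_rcos Zc_lcos)
  ultimately show ?thesis by (rule normalI)
qed

lemma PSL2_group: "group (PSL2 (K::'k::field itself))"
  unfolding PSL2_def by (rule normal.factorgroup_is_group[OF Zc_normal])

lemma PSL2_carrier: "carrier (PSL2 K) = {{A, mneg A} | A. mat2_det A = 1}"
  by (auto simp: PSL2_def carrier_FactGroup Zc_rcos SL2_carrier)

lemma PSL2_one: "one (PSL2 K) = {mat2_id, mat2_negid}"
  by (simp add: PSL2_def)

lemma PSL2_mult: "{A, mneg A} \<otimes>\<^bsub>PSL2 K\<^esub> {B, mneg B} = {mat2_mult A B, mneg (mat2_mult A B)}"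
  by (auto simp: PSL2_def set_mult_def SL2_mult)

lemma cl_eq: "({A, mneg A} = {B, mneg B}) \<longleftrightarrow> (A = B \<or> A = mneg B)"
  by (cases A; cases B) auto

lemma exists_even_map3:
  assumes n5: "n \<ge> 5" and abc: "distinct [a,b,c::nat]" "{a,b,c} \<subseteq> {1..n}"
    and xyz: "distinct [x,y,z::nat]" "{x,y,z} \<subseteq> {1..n}"
  shows "\<exists>q. q permutes {1..n} \<and> evenperm q \<and> q a = x \<and> q b = y \<and> q c = z"
proof -
  define q1 where "q1 = transpose a x"
  define q2 where "q2 = transpose (q1 b) y"
  define q3 where "q3 = transpose (q2 (q1 c)) z"
  define p where "p = q3 \<circ> q2 \<circ> q1"
  have P1: "q1 permutes {1..n}" unfolding q1_def using abc xyz by (intro permutes_swap_id) auto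
  have bc: "b \<in> {1..n}" "c \<in> {1..n}" using abc by auto
  have b1: "q1 b \<in> {1..n}" "q1 c \<in> {1..n}" using bc by (simp_all only: permutes_in_image[OF P1])
  have P2: "q2 permutes {1..n}" unfolding q2_def using b1 xyz by (intro permutes_swap_id) auto
  have c2: "q2 (q1 c) \<in> {1..n}" using b1 by (simp_all only: permutes_in_image[OF P2])
  have P3: "q3 permutes {1..n}" unfolding q3_def using c2 xyz by (intro permutes_swap_id) auto
  have Pp: "p permutes {1..n}" unfolding p_def using P1 P2 P3 by (intro permutes_compose) auto
  have i1: "inj q1" "inj q2" using P1 P2 permutes_inj by auto
  have e1: "q1 a = x" unfolding q1_def by simp
  have ne1: "q1 b \<noteq> x" "q1 c \<noteq> x" "q1 b \<noteq> q1 c" using abc e1 by (auto simp: inj_eq[OF i1(1)])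
  have e2: "q2 x = x" "q2 (q1 b) = y" unfolding q2_def using ne1 xyz by auto
  have ne2: "q2 (q1 c) \<noteq> x" "q2 (q1 c) \<noteq> y" using ne1 e2 by (metis inj_eq[OF i1(2)])+
  have e3: "q3 x = x" "q3 y = y" "q3 (q2 (q1 c)) = z" unfolding q3_def using ne2 xyz by auto
  have pv: "p a = x" "p b = y" "p c = z" unfolding p_def using e1 e2 e3 by auto
  show ?thesis
  proof (cases "evenperm p")
    case True then show ?thesis using Pp pv by blast
  next
    case False
    have "card ({1..n} - {x,y,z}) \<ge> 2"
    proof -
      have "card ({1..n} - {x,y,z}) = card {1..n} - card {x,y,z}"
        using xyz(2) by (intro card_Diff_subset) simp_all
      moreover have "card {x,y,z} = 3" using xyz by auto
      ultimately show ?thesis using n5 by simp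
    qed
    then obtain u w where uw: "u \<in> {1..n} - {x,y,z}" "w \<in> {1..n} - {x,y,z}" "u \<noteq> w"
    proof -
      have "{1..n} - {x,y,z} \<noteq> {}"
        using \<open>card ({1..n} - {x,y,z}) \<ge> 2\<close> by (metis card.empty not_numeral_le_zero)
      then obtain u where u: "u \<in> {1..n} - {x,y,z}" by blast
      have "card ({1..n} - {x,y,z} - {u}) \<ge> 1"
        using \<open>card ({1..n} - {x,y,z}) \<ge> 2\<close> u by simp
      then have "{1..n} - {x,y,z} - {u} \<noteq> {}" by (metis card.empty not_one_le_zero)
      then obtain w where "w \<in> {1..n} - {x,y,z} - {u}" by blast
      then show ?thesis using u that by blast
    qed
    define q where "q = transpose u w \<circ> p"
    have Pq: "q permutes {1..n}" unfolding q_def using uw Pp by (intro permutes_compose permutes_swap_id) auto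
    have pp: "permutation p" using Pp permutation_permutes by blast
    have "evenperm q" unfolding q_def
      using evenperm_comp[OF permutation_swap_id pp] False uw(3) by (simp add: evenperm_swap)
    moreover have "q a = x" "q b = y" "q c = z" unfolding q_def using pv uw by auto
    ultimately show ?thesis using Pq by blast
  qed
qed

lemma kernel_all:
  assumes grp: "group H" and hom: "\<rho> \<in> hom (alt_group n) H" and n5: "n \<ge> 5"
    and abc: "distinct [a,b,c]" "{a,b,c} \<subseteq> {1..n}"
    and triv: "\<rho> (cycle_of_list [a,b,c]) = \<one>\<^bsub>H\<^esub>"
  shows "\<forall>\<sigma> \<in> carrier (alt_group n). \<rho> \<sigma> = \<one>\<^bsub>H\<^esub>"
proof -
  interpret group_hom "alt_group n" H \<rho>
    using grp hom alt_group_is_group by (simp add: group_hom_def group_hom_axioms_def)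
  let ?N = "kernel (alt_group n) H \<rho>"
  have c0: "cycle_of_list [a,b,c] \<in> ?N"
  proof -
    have "cycle_of_list [a,b,c] \<in> three_cycles n"
      using abc by (intro CollectI exI[of _ "[a,b,c]"]) auto
    then show ?thesis using triv three_cycles_incl[of n] unfolding kernel_def by blast
  qed
  have "three_cycles n \<subseteq> ?N"
  proof
    fix p assume "p \<in> three_cycles n"
    then obtain cs where cs: "p = cycle_of_list cs" "cycle cs" "length cs = 3" "set cs \<subseteq> {1..n}"
      by auto
    obtain x y z where xyz: "cs = [x,y,z]" using stupid_lemma[OF cs(3)] by blast
    obtain q where q: "q permutes {1..n}" "evenperm q" "q a = x" "q b = y" "q c = z"
      using exists_even_map3[OF n5 abc, of x y z] cs xyz by auto
    have qc: "q \<in> carrier (alt_group n)" using q by (simp add: alt_group_carrier)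
    have "q \<circ> cycle_of_list [a,b,c] \<circ> inv' q = cycle_of_list [x,y,z]"
    proof -
      have "cycle [a,b,c]" using abc by simp
      moreover have "bij q" using q(1) by (rule permutes_bij)
      ultimately show ?thesis using conjugation_of_cycle[of "[a,b,c]" q] q by simp
    qed
    moreover have "q \<otimes>\<^bsub>alt_group n\<^esub> cycle_of_list [a,b,c] \<otimes>\<^bsub>alt_group n\<^esub> inv\<^bsub>alt_group n\<^esub> q \<in> ?N"
      using normal.inv_op_closed2[OF normal_kernel qc c0] .
    ultimately show "p \<in> ?N" using cs xyz alt_group_inv_equality[OF qc] by (simp add: alt_group_mult)
  qed
  then have "generate (alt_group n) (three_cycles n) \<subseteq> ?N"
    by (intro G.generate_subgroup_incl subgroup_kernel)
  then show ?thesis using alt_group_carrier_as_three_cycles[of n] unfolding kernel_def by auto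
qed

lemma cube_cases:
  fixes a b c d e :: "'k::field"
  assumes det: "a*d - b*c = 1"
    and cube: "mat2_mult (M2 a b c d) (mat2_mult (M2 a b c d) (M2 a b c d)) = M2 e 0 0 e"
  shows "(b = 0 \<and> c = 0 \<and> a = d \<and> a*a = 1) \<or> a + d = -e"
proof -
  let ?t = "a + d"
  from cube have eqs: "a*(a*a+b*c) + b*(c*a+d*c) = e" "a*(a*b+b*d) + b*(c*b+d*d) = 0"
     "c*(a*a+b*c) + d*(c*a+d*c) = 0" "c*(a*b+b*d) + d*(c*b+d*d) = e" by simp_all
  have "b*(?t*?t - 1) = (a*(a*b+b*d) + b*(c*b+d*d)) + b*(a*d - b*c - 1)" by algebra
  then have h1: "b*(?t*?t - 1) = 0" using eqs det by simp
  have "c*(?t*?t - 1) = (c*(a*a+b*c) + d*(c*a+d*c)) + c*(a*d - b*c - 1)" by algebra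
  then have h2: "c*(?t*?t - 1) = 0" using eqs det by simp
  have "(a - d)*(?t*?t - 1) = (a*(a*a+b*c) + b*(c*a+d*c)) - (c*(a*b+b*d) + d*(c*b+d*d)) + (a-d)*(a*d - b*c - 1)" by algebra
  then have h3: "(a - d)*(?t*?t - 1) = 0" using eqs det by simp
  have "a*(?t*?t - 1) - ?t = (a*(a*a+b*c) + b*(c*a+d*c)) + (a + ?t)*(a*d - b*c - 1)" by algebra
  then have h4: "a*(?t*?t - 1) - ?t = e" using eqs det by simp
  show ?thesis
  proof (cases "?t*?t - 1 = 0")
    case True
    then have "e = -(a+d)" using h4 by simp
    then show ?thesis by simp
  next
    case False
    then have "b = 0" "c = 0" "a = d" using h1 h2 h3 by simp_all
    then show ?thesis using det by simp
  qed
qed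

lemma anticomm_trace:
  fixes a b c d e f g h :: "'k::field"
  assumes detY: "e*h - f*g = 1"
    and ac: "mat2_mult (M2 a b c d) (M2 e f g h) = mneg (mat2_mult (M2 e f g h) (M2 a b c d))"
  shows "2*(a+d) = 0"
proof -
  from ac have p0: "a*e+b*g = -(e*a+f*c)" "a*f+b*h = -(e*b+f*d)" "c*e+d*g = -(g*a+h*c)" "c*f+d*h = -(g*b+h*d)"
    by (simp_all only: mat2_mult.simps mneg.simps mat2.inject)
  have p: "a*e+b*g+(e*a+f*c) = 0" "a*f+b*h+(e*b+f*d) = 0" "c*e+d*g+(g*a+h*c) = 0" "c*f+d*h+(g*b+h*d) = 0"
    using p0(1) apply algebra using p0(2) apply algebra using p0(3) apply algebra using p0(4) by algebra
  have "2*(a+d) = h*(a*e+b*g+(e*a+f*c)) - f*(c*e+d*g+(g*a+h*c)) - g*(a*f+b*h+(e*b+f*d)) + e*(c*f+d*h+(g*b+h*d)) - 2*(a+d)*(e*h - f*g - 1)"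
    by algebra
  then show ?thesis using p detY by simp
qed

lemma lin_h: "(k::'k::field)*(a-d) = e - h \<Longrightarrow> h = (e - k*a) + k*d"
  by algebra

lemma centralizer:
  fixes a b c d e f g h :: "'k::field"
  assumes ns: "b \<noteq> 0 \<or> c \<noteq> 0 \<or> a \<noteq> d"
    and cm: "mat2_mult (M2 a b c d) (M2 e f g h) = mat2_mult (M2 e f g h) (M2 a b c d)"
  shows "\<exists>\<alpha> \<beta>. e = \<alpha> + \<beta>*a \<and> f = \<beta>*b \<and> g = \<beta>*c \<and> h = \<alpha> + \<beta>*d"
proof -
  from cm have q0: "a*e+b*g = e*a+f*c" "a*f+b*h = e*b+f*d" "c*e+d*g = g*a+h*c" by simp_all
  have q1: "b*g = c*f" using q0(1) by algebra
  have q2: "f*(a-d) = b*(e-h)" using q0(2) by algebra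
  have q3: "c*(e-h) = g*(a-d)" using q0(3) by algebra
  consider (B) "b \<noteq> 0" | (C) "c \<noteq> 0" | (D) "b = 0" "c = 0" "a \<noteq> d" using ns by blast
  then show ?thesis
  proof cases
    case B
    have "g = f/b*c" using q1 B by (simp add: field_simps)
    moreover have "f/b*(a-d) = e - h" using q2 B by (simp add: field_simps)
    then have "h = (e - f/b*a) + f/b*d" by (metis (no_types) lin_h)
    moreover have "f = f/b*b" using B by simp
    ultimately show ?thesis by (intro exI[of _ "e - f/b*a"] exI[of _ "f/b"]) simp
  next
    case C
    have "f = g/c*b" using q1 C by (simp add: field_simps)
    moreover have "g/c*(a-d) = e - h" using q3 C by (simp add: field_simps)
    then have "h = (e - g/c*a) + g/c*d" by (metis (no_types) lin_h)
    moreover have "g = g/c*c" using C by simp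
    ultimately show ?thesis by (intro exI[of _ "e - g/c*a"] exI[of _ "g/c"]) simp
  next
    case D
    have ad: "a - d \<noteq> 0" using D by simp
    have "f = 0" using q2 D ad by simp
    moreover have "g = 0" using q3 D ad by simp
    moreover have "(e-h)/(a-d)*(a-d) = e - h" using ad by simp
    then have "h = (e - (e-h)/(a-d)*a) + (e-h)/(a-d)*d" by (metis (no_types) lin_h)
    ultimately show ?thesis using D by (intro exI[of _ "e - (e-h)/(a-d)*a"] exI[of _ "(e-h)/(a-d)"]) simp
  qed
qed

lemma alg_A:
  fixes \<alpha> \<beta> \<tau> \<tau>' :: "'k::field"
  assumes t1: "\<tau>*\<tau> = 1" and t2: "\<tau>'*\<tau>' = 1" and tr: "2*\<alpha> + \<beta>*\<tau> = \<tau>'"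
    and dt: "\<alpha>*\<alpha> + \<alpha>*\<beta>*\<tau> + \<beta>*\<beta> = 1" and three: "(3::'k) \<noteq> 0"
  shows "(\<alpha> = 0 \<and> \<beta> = \<tau>*\<tau>') \<or> (\<alpha> = \<tau>' \<and> \<beta> = -(\<tau>*\<tau>'))"
proof -
  have "\<tau>*(2*\<alpha> + \<beta>*\<tau>) = \<tau>*\<tau>'" using tr by simp
  then have "2*\<alpha>*\<tau> + \<beta>*(\<tau>*\<tau>) = \<tau>*\<tau>'" by (simp add: algebra_simps)
  then have b: "\<beta> = \<tau>*\<tau>' - 2*\<alpha>*\<tau>" using t1 by (simp add: algebra_simps)
  have "\<alpha>*\<alpha> + \<alpha>*\<beta>*\<tau> + \<beta>*\<beta> = \<alpha>*\<alpha> + \<alpha>*\<tau>'*(\<tau>*\<tau>) - 2*\<alpha>*\<alpha>*(\<tau>*\<tau>) + (\<tau>*\<tau>)*(\<tau>'*\<tau>') - 4*\<alpha>*\<tau>'*(\<tau>*\<tau>) + 4*\<alpha>*\<alpha>*(\<tau>*\<tau>)"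
    unfolding b by algebra
  then have "1 = \<alpha>*\<alpha> + \<alpha>*\<tau>' - 2*\<alpha>*\<alpha> + 1 - 4*\<alpha>*\<tau>' + 4*\<alpha>*\<alpha>" using t1 t2 dt by simp
  then have "3*(\<alpha>*(\<alpha> - \<tau>')) = 0" by algebra
  then have "\<alpha> = 0 \<or> \<alpha> = \<tau>'" using three by simp
  then show ?thesis
  proof
    assume "\<alpha> = 0" then show ?thesis using b by simp
  next
    assume a: "\<alpha> = \<tau>'"
    have "\<beta> = -(\<tau>*\<tau>')" using b unfolding a by algebra
    then show ?thesis using a by simp
  qed
qed

lemma alg_B:
  fixes \<alpha> \<beta> \<tau> :: "'k::field"
  assumes t1: "\<tau>*\<tau> = 1" and dt: "\<alpha>*\<alpha> + \<alpha>*\<beta>*\<tau> + \<beta>*\<beta> = 1"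
    and sq: "\<beta>*(2*\<alpha> + \<beta>*\<tau>) = 0" and three: "(3::'k) = 0"
  shows "\<beta> = 0"
proof (rule ccontr)
  assume "\<beta> \<noteq> 0"
  then have a2: "2*\<alpha> = -(\<beta>*\<tau>)" using sq by (simp add: eq_neg_iff_add_eq_0)
  have "4*(\<alpha>*\<alpha> + \<alpha>*\<beta>*\<tau> + \<beta>*\<beta>) = (2*\<alpha>)*(2*\<alpha>) + 2*(2*\<alpha>)*\<beta>*\<tau> + 4*\<beta>*\<beta>" by algebra
  also have "\<dots> = \<beta>*\<beta>*(\<tau>*\<tau>) - 2*\<beta>*\<beta>*(\<tau>*\<tau>) + 4*\<beta>*\<beta>" unfolding a2 by algebra
  also have "\<dots> = 3*(\<beta>*\<beta>)" using t1 by algebra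
  finally have "4 = (3::'k)*(\<beta>*\<beta>)" using dt by simp
  then have "(4::'k) = 0" using three by simp
  moreover have "(4::'k) = 3 + 1" by simp
  ultimately show False using three by simp
qed

lemma sq1: "(x::'k::field)*x = 1 \<Longrightarrow> x = 1 \<or> x = -1"
  using square_eq_1_iff by blast

lemma nonscalar_or_Z:
  fixes a b c d :: "'k::field"
  assumes "a*d - b*c = 1" "\<not> (b \<noteq> 0 \<or> c \<noteq> 0 \<or> a \<noteq> d)"
  shows "M2 a b c d = mat2_id \<or> M2 a b c d = mat2_negid"
proof -
  have "b = 0" "c = 0" "a = d" using assms(2) by auto
  then have "a*a = 1" using assms(1) by simp
  then have "a = 1 \<or> a = -1" by (rule sq1)
  then show ?thesis using \<open>b = 0\<close> \<open>c = 0\<close> \<open>a = d\<close> by (auto simp: mat2_id_def mat2_negid_def)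
qed

lemma cube_trace:
  fixes a b c d :: "'k::field"
  assumes det: "a*d - b*c = 1" and ns: "b \<noteq> 0 \<or> c \<noteq> 0 \<or> a \<noteq> d"
    and cX: "mat2_mult (M2 a b c d) (mat2_mult (M2 a b c d) (M2 a b c d)) = mat2_id \<or>
             mat2_mult (M2 a b c d) (mat2_mult (M2 a b c d) (M2 a b c d)) = mat2_negid"
  shows "(a+d)*(a+d) = 1"
proof -
  obtain e :: 'k where e: "e = 1 \<or> e = -1" "mat2_mult (M2 a b c d) (mat2_mult (M2 a b c d) (M2 a b c d)) = M2 e 0 0 e"
  proof -
    show ?thesis
    proof (cases "mat2_mult (M2 a b c d) (mat2_mult (M2 a b c d) (M2 a b c d)) = mat2_id")
      case True then show ?thesis using that[of 1] by (simp add: mat2_id_def del: mat2_mult.simps)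
    next
      case False then show ?thesis using cX that[of "-1"] by (simp add: mat2_negid_def del: mat2_mult.simps)
    qed
  qed
  from cube_cases[OF det e(2)] ns have "a + d = -e" by auto
  then show ?thesis using e(1) by auto
qed

lemma comm_fix:
  fixes a b c d e f g h :: "'k::field"
  assumes detY: "e*h - f*g = 1" and tr: "(a+d)*(a+d) = 1"
    and com: "mat2_mult (M2 a b c d) (M2 e f g h) = mat2_mult (M2 e f g h) (M2 a b c d) \<or>
              mat2_mult (M2 a b c d) (M2 e f g h) = mneg (mat2_mult (M2 e f g h) (M2 a b c d))"
  shows "mat2_mult (M2 a b c d) (M2 e f g h) = mat2_mult (M2 e f g h) (M2 a b c d)"
proof (cases "(2::'k) = 0")
  case True
  have "\<And>x::'k. -x = x"
  proof -
    fix x :: 'k have "x + x = 2*x" by simp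
    then have "x + x = 0" using True by simp
    then have "x = -x" by (simp only: add_eq_0_iff2)
    then show "-x = x" by (rule sym)
  qed
  then have "\<And>M::'k mat2. mneg M = M" by (case_tac M) (simp only: mneg.simps)
  then show ?thesis using com by simp
next
  case False
  show ?thesis
  proof (rule ccontr)
    assume "\<not> ?thesis"
    then have "2*(a+d) = 0" using com anticomm_trace[OF detY] by blast
    then have "a + d = 0" using False by (simp only: mult_eq_0_iff) simp
    then show False using tr by simp
  qed
qed


lemma pairA:
  fixes a b c d e f g h :: "'k::field"
  assumes detX: "a*d - b*c = 1" and detY: "e*h - f*g = 1"
    and cX: "mat2_mult (M2 a b c d) (mat2_mult (M2 a b c d) (M2 a b c d)) = mat2_id \<or>
             mat2_mult (M2 a b c d) (mat2_mult (M2 a b c d) (M2 a b c d)) = mat2_negid"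
    and cY: "mat2_mult (M2 e f g h) (mat2_mult (M2 e f g h) (M2 e f g h)) = mat2_id \<or>
             mat2_mult (M2 e f g h) (mat2_mult (M2 e f g h) (M2 e f g h)) = mat2_negid"
    and com: "mat2_mult (M2 a b c d) (M2 e f g h) = mat2_mult (M2 e f g h) (M2 a b c d) \<or>
              mat2_mult (M2 a b c d) (M2 e f g h) = mneg (mat2_mult (M2 e f g h) (M2 a b c d))"
    and three: "(3::'k) \<noteq> 0"
  shows "M2 a b c d = mat2_id \<or> M2 a b c d = mat2_negid \<or> M2 e f g h = mat2_id \<or> M2 e f g h = mat2_negid \<or>
         M2 e f g h = M2 a b c d \<or> M2 e f g h = mneg (M2 a b c d) \<or>
         M2 e f g h = mat2_mult (M2 a b c d) (M2 a b c d) \<or> M2 e f g h = mneg (mat2_mult (M2 a b c d) (M2 a b c d))"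
proof (cases "b \<noteq> 0 \<or> c \<noteq> 0 \<or> a \<noteq> d")
  case False then show ?thesis using nonscalar_or_Z[OF detX] by blast
next
  case nsX: True
  show ?thesis
  proof (cases "f \<noteq> 0 \<or> g \<noteq> 0 \<or> e \<noteq> h")
    case False then show ?thesis using nonscalar_or_Z[OF detY] by blast
  next
    case nsY: True
    have tX: "(a+d)*(a+d) = 1" by (rule cube_trace[OF detX nsX cX])
    have tY: "(e+h)*(e+h) = 1" by (rule cube_trace[OF detY nsY cY])
    have cm: "mat2_mult (M2 a b c d) (M2 e f g h) = mat2_mult (M2 e f g h) (M2 a b c d)"
      by (rule comm_fix[OF detY tX com])
    obtain \<alpha> \<beta> where ab: "e = \<alpha> + \<beta>*a" "f = \<beta>*b" "g = \<beta>*c" "h = \<alpha> + \<beta>*d"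
      using centralizer[OF nsX cm] by blast
    have tr: "2*\<alpha> + \<beta>*(a+d) = e + h" unfolding ab by algebra
    have "e*h - f*g = \<alpha>*\<alpha> + \<alpha>*\<beta>*(a+d) + \<beta>*\<beta>*(a*d - b*c)" unfolding ab by algebra
    then have dt: "\<alpha>*\<alpha> + \<alpha>*\<beta>*(a+d) + \<beta>*\<beta> = 1" using detX detY by simp
    have "(\<alpha> = 0 \<and> \<beta> = (a+d)*(e+h)) \<or> (\<alpha> = e+h \<and> \<beta> = -((a+d)*(e+h)))"
      by (rule alg_A[OF tX tY tr dt three])
    then show ?thesis
    proof
      assume h1: "\<alpha> = 0 \<and> \<beta> = (a+d)*(e+h)"
      have "\<beta>*\<beta> = ((a+d)*(a+d))*((e+h)*(e+h))" unfolding h1[THEN conjunct2] by algebra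
      then have "\<beta>*\<beta> = 1" using tX tY by simp
      then have "\<beta> = 1 \<or> \<beta> = -1" by (rule sq1)
      then show ?thesis
      proof
        assume "\<beta> = 1"
        then have "M2 e f g h = M2 a b c d" using h1[THEN conjunct1] ab by simp
        then show ?thesis by blast
      next
        assume "\<beta> = -1"
        then have "M2 e f g h = mneg (M2 a b c d)" using h1[THEN conjunct1] ab by simp
        then show ?thesis by blast
      qed
    next
      assume h2: "\<alpha> = e+h \<and> \<beta> = -((a+d)*(e+h))"
      have X2: "mat2_mult (M2 a b c d) (M2 a b c d) = M2 ((a+d)*a - 1) ((a+d)*b) ((a+d)*c) ((a+d)*d - 1)"
      proof -
        have "a*a+b*c = (a+d)*a - (a*d - b*c)" "c*b+d*d = (a+d)*d - (a*d - b*c)" by algebra+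
        then show ?thesis using detX by (simp add: algebra_simps)
      qed
      obtain t where t: "t = e + h" by blast
      have al: "\<alpha> = t" "\<beta> = -((a+d)*t)" using h2 t by simp_all
      have Ye: "M2 e f g h = M2 (t*(1 - (a+d)*a)) (t*(-((a+d)*b))) (t*(-((a+d)*c))) (t*(1 - (a+d)*d))"
        unfolding ab al by (simp add: algebra_simps)
      have "t = 1 \<or> t = -1" using tY t by (simp add: sq1)
      then show ?thesis
      proof
        assume "t = 1"
        then have "M2 e f g h = mneg (mat2_mult (M2 a b c d) (M2 a b c d))" unfolding X2 Ye by simp
        then show ?thesis by blast
      next
        assume "t = -1"
        then have "M2 e f g h = mat2_mult (M2 a b c d) (M2 a b c d)" unfolding X2 Ye by simp
        then show ?thesis by blast
      qed
    qed
  qed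
qed

lemma pairB:
  fixes a b c d e f g h :: "'k::field"
  assumes detX: "a*d - b*c = 1" and detY: "e*h - f*g = 1"
    and cX: "mat2_mult (M2 a b c d) (mat2_mult (M2 a b c d) (M2 a b c d)) = mat2_id \<or>
             mat2_mult (M2 a b c d) (mat2_mult (M2 a b c d) (M2 a b c d)) = mat2_negid"
    and sY: "mat2_mult (M2 e f g h) (M2 e f g h) = mat2_id \<or> mat2_mult (M2 e f g h) (M2 e f g h) = mat2_negid"
    and com: "mat2_mult (M2 a b c d) (M2 e f g h) = mat2_mult (M2 e f g h) (M2 a b c d) \<or>
              mat2_mult (M2 a b c d) (M2 e f g h) = mneg (mat2_mult (M2 e f g h) (M2 a b c d))"
    and three: "(3::'k) = 0"
  shows "M2 a b c d = mat2_id \<or> M2 a b c d = mat2_negid \<or> M2 e f g h = mat2_id \<or> M2 e f g h = mat2_negid"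
proof (cases "b \<noteq> 0 \<or> c \<noteq> 0 \<or> a \<noteq> d")
  case False then show ?thesis using nonscalar_or_Z[OF detX] by blast
next
  case nsX: True
  have tX: "(a+d)*(a+d) = 1" by (rule cube_trace[OF detX nsX cX])
  have cm: "mat2_mult (M2 a b c d) (M2 e f g h) = mat2_mult (M2 e f g h) (M2 a b c d)"
    by (rule comm_fix[OF detY tX com])
  obtain \<alpha> \<beta> where ab: "e = \<alpha> + \<beta>*a" "f = \<beta>*b" "g = \<beta>*c" "h = \<alpha> + \<beta>*d"
    using centralizer[OF nsX cm] by blast
  have tr: "e + h = 2*\<alpha> + \<beta>*(a+d)" unfolding ab by algebra
  have "e*h - f*g = \<alpha>*\<alpha> + \<alpha>*\<beta>*(a+d) + \<beta>*\<beta>*(a*d - b*c)" unfolding ab by algebra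
  then have dt: "\<alpha>*\<alpha> + \<alpha>*\<beta>*(a+d) + \<beta>*\<beta> = 1" using detX detY by simp
  obtain s :: 'k where s: "mat2_mult (M2 e f g h) (M2 e f g h) = M2 s 0 0 s"
    using sY by (auto simp: mat2_id_def mat2_negid_def simp del: mat2_mult.simps)
  then have sq: "e*f + f*h = 0" "g*e + h*g = 0" "e*e + f*g = g*f + h*h" by simp_all
  show ?thesis
  proof (cases "e + h = 0")
    case False
    have "f*(e+h) = 0" "g*(e+h) = 0" "(e-h)*(e+h) = 0" using sq by algebra+
    then have "f = 0" "g = 0" "e = h" using False by simp_all
    then show ?thesis using nonscalar_or_Z[OF detY] by blast
  next
    case True
    then have "\<beta>*(2*\<alpha> + \<beta>*(a+d)) = 0" using tr by simp
    then have "\<beta> = 0" by (rule alg_B[OF tX dt _ three])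
    then have "f = 0" "g = 0" "e = h" using ab by simp_all
    then show ?thesis using nonscalar_or_Z[OF detY] by blast
  qed
qed

lemma fun_eq7:
  fixes f g :: "nat \<Rightarrow> nat"
  assumes "f 0 = g 0" "f 1 = g 1" "f 2 = g 2" "f 3 = g 3" "f 4 = g 4" "f 5 = g 5" "f 6 = g 6" "f 7 = g 7"
    and "\<And>x. x > 7 \<Longrightarrow> f x = g x"
  shows "f = g"
proof
  fix x show "f x = g x"
  proof (cases "x > 7")
    case True then show ?thesis using assms(9) by blast
  next
    case False
    then have "x = 0 \<or> x = 1 \<or> x = 2 \<or> x = 3 \<or> x = 4 \<or> x = 5 \<or> x = 6 \<or> x = 7" by linarith
    then show ?thesis using assms(1-8) by fastforce
  qed
qed

lemma t1: "cycle_of_list [1,2,3::nat] \<circ> (cycle_of_list [1,2,3] \<circ> cycle_of_list [1,2,3]) = id"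
  by (rule fun_eq7) (simp_all add: transpose_def)

lemma t2: "cycle_of_list [1,2,3::nat] \<circ> cycle_of_list [4,5,6] = cycle_of_list [4,5,6] \<circ> cycle_of_list [1,2,3]"
  by (rule fun_eq7) (simp_all add: transpose_def)

lemma t3: "(transpose 1 4 \<circ> transpose 2 5) \<circ> (transpose 5 3 \<circ> transpose (3::nat) 6) \<circ> (cycle_of_list [4,5,6] \<circ> cycle_of_list [1,2,3])
   = (cycle_of_list [4,5,6] \<circ> (cycle_of_list [1,2,3] \<circ> cycle_of_list [1,2,3])) \<circ> ((transpose 1 4 \<circ> transpose 2 5) \<circ> (transpose 5 3 \<circ> transpose 3 6))"
  by (rule fun_eq7) (simp_all add: transpose_def)

lemma t4: "(cycle_of_list [4,5,6] \<circ> cycle_of_list [1,2,3]) \<circ> (cycle_of_list [4,5,6] \<circ> (cycle_of_list [1,2,3] \<circ> cycle_of_list [1,2,3])) = cycle_of_list [4,6,5::nat]"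
  by (rule fun_eq7) (simp_all add: transpose_def)

lemma t5: "(transpose 4 5 \<circ> transpose 6 7) \<circ> (transpose 4 5 \<circ> transpose 3 (6::nat)) = cycle_of_list [3,7,6]"
  by (rule fun_eq7) (simp_all add: transpose_def)

lemma rho_rep:
  assumes hom: "\<rho> \<in> hom (alt_group n) (PSL2 (K::'k::field itself))" and s: "\<sigma> \<in> carrier (alt_group n)"
  shows "\<exists>a b c d. a*d - b*c = (1::'k) \<and> \<rho> \<sigma> = {M2 a b c d, mneg (M2 a b c d)}"
proof -
  have "\<rho> \<sigma> \<in> carrier (PSL2 K)" using hom s by (rule hom_in_carrier)
  then obtain A where A: "mat2_det A = 1" "\<rho> \<sigma> = {A, mneg A}" by (auto simp: PSL2_carrier)
  then show ?thesis by (cases A) auto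
qed

lemma rho_mult:
  assumes hom: "\<rho> \<in> hom (alt_group n) (PSL2 (K::'k::field itself))"
    and s: "\<sigma> \<in> carrier (alt_group n)" "\<tau> \<in> carrier (alt_group n)"
    and A: "\<rho> \<sigma> = {A, mneg A}" and B: "\<rho> \<tau> = {B, mneg B}"
  shows "\<rho> (\<sigma> \<circ> \<tau>) = {mat2_mult A B, mneg (mat2_mult A B)}"
proof -
  have "\<rho> (\<sigma> \<otimes>\<^bsub>alt_group n\<^esub> \<tau>) = \<rho> \<sigma> \<otimes>\<^bsub>PSL2 K\<^esub> \<rho> \<tau>" using hom s by (simp add: hom_mult)
  then show ?thesis using A B by (simp add: alt_group_mult PSL2_mult)
qed

lemma rho_id:
  assumes hom: "\<rho> \<in> hom (alt_group n) (PSL2 (K::'k::field itself))"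
  shows "\<rho> id = {mat2_id, mat2_negid}"
proof -
  interpret group_hom "alt_group n" "PSL2 K" \<rho>
    using hom alt_group_is_group PSL2_group by (simp add: group_hom_def group_hom_axioms_def)
  show ?thesis using hom_one by (simp add: alt_group_one PSL2_one)
qed

lemma one_iff: "{A, mneg A} = {mat2_id, mat2_negid} \<longleftrightarrow> (A = mat2_id \<or> A = mat2_negid)"
  using cl_eq[of A mat2_id] by simp

lemma dtr_carrier:
  assumes "a \<noteq> b" "c \<noteq> d" "{a,b,c,d} \<subseteq> {1..n}"
  shows "transpose a b \<circ> transpose c d \<in> carrier (alt_group n)"
proof -
  have "transpose a b \<circ> transpose c d permutes {1..n}"
    using assms by (intro permutes_compose permutes_swap_id) auto
  moreover have "evenperm (transpose a b \<circ> transpose c d)"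
    using evenperm_comp[OF permutation_swap_id permutation_swap_id, of a b c d] assms(1,2)
    by (simp add: evenperm_swap)
  ultimately show ?thesis by (simp add: alt_group_carrier)
qed

lemma cyc_carrier:
  assumes "distinct [a,b,c]" "{a,b,c} \<subseteq> {1..n}"
  shows "cycle_of_list [a,b,c] \<in> carrier (alt_group n)"
proof -
  have "cycle_of_list [a,b,c] \<in> three_cycles n"
    using assms by (intro CollectI exI[of _ "[a,b,c]"]) auto
  then show ?thesis using three_cycles_incl by blast
qed

lemma branchA:
  assumes hom: "\<rho> \<in> hom (alt_group n) (PSL2 (K::'k::field itself))" and n6: "n \<ge> 6"
    and three: "(3::'k) \<noteq> 0"
  shows "\<forall>\<sigma> \<in> carrier (alt_group n). \<rho> \<sigma> = \<one>\<^bsub>PSL2 K\<^esub>"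
proof -
  have grp: "group (PSL2 K)" by (rule PSL2_group)
  interpret group_hom "alt_group n" "PSL2 K" \<rho>
    using hom alt_group_is_group PSL2_group by (simp add: group_hom_def group_hom_axioms_def)
  have n5: "n \<ge> 5" using n6 by simp
  note KA = kernel_all[OF grp hom n5]
  define x where "x = cycle_of_list [1,2,3::nat]"
  define y where "y = cycle_of_list [4,5,6::nat]"
  have xc: "x \<in> carrier (alt_group n)" unfolding x_def using n6 by (intro cyc_carrier) auto
  have yc: "y \<in> carrier (alt_group n)" unfolding y_def using n6 by (intro cyc_carrier) auto
  have xxc: "x \<circ> x \<in> carrier (alt_group n)" using xc G.m_closed by (simp add: alt_group_mult)
  obtain a b c d where X: "a*d - b*c = (1::'k)" "\<rho> x = {M2 a b c d, mneg (M2 a b c d)}"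
    using rho_rep[OF hom xc] by blast
  obtain e f g h where Y: "e*h - f*g = (1::'k)" "\<rho> y = {M2 e f g h, mneg (M2 e f g h)}"
    using rho_rep[OF hom yc] by blast
  define XX where "XX = M2 a b c d"
  define YY where "YY = M2 e f g h"
  have rx: "\<rho> x = {XX, mneg XX}" using X XX_def by simp
  have ry: "\<rho> y = {YY, mneg YY}" using Y YY_def by simp
  have rxx: "\<rho> (x \<circ> x) = {mat2_mult XX XX, mneg (mat2_mult XX XX)}" by (rule rho_mult[OF hom xc xc]) (rule rx, rule rx)
  have "\<rho> (x \<circ> (x \<circ> x)) = {mat2_mult XX (mat2_mult XX XX), mneg (mat2_mult XX (mat2_mult XX XX))}"
    by (rule rho_mult[OF hom xc xxc]) (rule rx, rule rxx)
  moreover have "x \<circ> (x \<circ> x) = id" unfolding x_def by (rule t1)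
  ultimately have "{mat2_mult XX (mat2_mult XX XX), mneg (mat2_mult XX (mat2_mult XX XX))} = {mat2_id, mat2_negid}"
    using rho_id[OF hom] by simp
  then have cX: "mat2_mult XX (mat2_mult XX XX) = mat2_id \<or> mat2_mult XX (mat2_mult XX XX) = mat2_negid"
    by (simp only: one_iff)
  have yyc: "y \<circ> y \<in> carrier (alt_group n)" using yc G.m_closed by (simp add: alt_group_mult)
  have ryy: "\<rho> (y \<circ> y) = {mat2_mult YY YY, mneg (mat2_mult YY YY)}" by (rule rho_mult[OF hom yc yc]) (rule ry, rule ry)
  have "\<rho> (y \<circ> (y \<circ> y)) = {mat2_mult YY (mat2_mult YY YY), mneg (mat2_mult YY (mat2_mult YY YY))}"
    by (rule rho_mult[OF hom yc yyc]) (rule ry, rule ryy)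
  moreover have "y \<circ> (y \<circ> y) = id" unfolding y_def by (rule fun_eq7) (simp_all add: transpose_def)
  ultimately have "{mat2_mult YY (mat2_mult YY YY), mneg (mat2_mult YY (mat2_mult YY YY))} = {mat2_id, mat2_negid}"
    using rho_id[OF hom] by simp
  then have cY: "mat2_mult YY (mat2_mult YY YY) = mat2_id \<or> mat2_mult YY (mat2_mult YY YY) = mat2_negid"
    by (simp only: one_iff)
  have rxy: "\<rho> (x \<circ> y) = {mat2_mult XX YY, mneg (mat2_mult XX YY)}"
    by (rule rho_mult[OF hom xc yc]) (rule rx, rule ry)
  have ryx: "\<rho> (y \<circ> x) = {mat2_mult YY XX, mneg (mat2_mult YY XX)}"
    by (rule rho_mult[OF hom yc xc]) (rule ry, rule rx)
  have ryxx: "\<rho> (y \<circ> (x \<circ> x)) = {mat2_mult YY (mat2_mult XX XX), mneg (mat2_mult YY (mat2_mult XX XX))}"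
    by (rule rho_mult[OF hom yc xxc]) (rule ry, rule rxx)
  have "x \<circ> y = y \<circ> x" unfolding x_def y_def by (rule t2)
  then have "{mat2_mult XX YY, mneg (mat2_mult XX YY)} = {mat2_mult YY XX, mneg (mat2_mult YY XX)}"
    using rxy ryx by simp
  then have com: "mat2_mult XX YY = mat2_mult YY XX \<or> mat2_mult XX YY = mneg (mat2_mult YY XX)"
    by (simp add: cl_eq)
  have PA: "XX = mat2_id \<or> XX = mat2_negid \<or> YY = mat2_id \<or> YY = mat2_negid \<or>
         YY = XX \<or> YY = mneg XX \<or> YY = mat2_mult XX XX \<or> YY = mneg (mat2_mult XX XX)"
    using pairA[OF X(1) Y(1) cX[unfolded XX_def] cY[unfolded YY_def] com[unfolded XX_def YY_def] three]
    unfolding XX_def YY_def .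
  define h1 where "h1 = y \<circ> x"
  define h2 where "h2 = y \<circ> (x \<circ> x)"
  have h1c: "h1 \<in> carrier (alt_group n)" unfolding h1_def using xc yc G.m_closed by (simp add: alt_group_mult)
  have h2c: "h2 \<in> carrier (alt_group n)" unfolding h2_def using xxc yc G.m_closed by (simp add: alt_group_mult)
  have one_eq: "\<one>\<^bsub>PSL2 K\<^esub> = {mat2_id, mat2_negid}" by (simp add: PSL2_one)
  have assoc3: "mat2_mult (mat2_mult XX XX) XX = mat2_mult XX (mat2_mult XX XX)" by (simp add: mat2_mult_assoc)
  show ?thesis
  proof (cases "XX = mat2_id \<or> XX = mat2_negid")
    case True
    then have "\<rho> (cycle_of_list [1,2,3]) = \<one>\<^bsub>PSL2 K\<^esub>" using rx one_iff one_eq x_def by metis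
    then show ?thesis using KA[of 1 2 3] n6 by auto
  next
    case nX: False
    show ?thesis
    proof (cases "YY = mat2_id \<or> YY = mat2_negid")
      case True
      then have "\<rho> (cycle_of_list [4,5,6]) = \<one>\<^bsub>PSL2 K\<^esub>" using ry one_iff one_eq y_def by metis
      then show ?thesis using KA[of 4 5 6] n6 by auto
    next
      case nY: False
      have disj: "\<rho> h1 = \<one>\<^bsub>PSL2 K\<^esub> \<or> \<rho> h2 = \<one>\<^bsub>PSL2 K\<^esub>"
      proof -
        have "YY = XX \<or> YY = mneg XX \<or> YY = mat2_mult XX XX \<or> YY = mneg (mat2_mult XX XX)"
          using PA nX nY by blast
        then show ?thesis
        proof (elim disjE)
          assume "YY = XX"
          then have "\<rho> h2 = {mat2_mult XX (mat2_mult XX XX), mneg (mat2_mult XX (mat2_mult XX XX))}"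
            unfolding h2_def using ryxx by simp
          then show ?thesis using cX one_iff one_eq by metis
        next
          assume "YY = mneg XX"
          then have "\<rho> h2 = {mneg (mat2_mult XX (mat2_mult XX XX)), mat2_mult XX (mat2_mult XX XX)}"
            unfolding h2_def using ryxx by simp
          then have "\<rho> h2 = {mat2_mult XX (mat2_mult XX XX), mneg (mat2_mult XX (mat2_mult XX XX))}" by auto
          then show ?thesis using cX one_iff one_eq by metis
        next
          assume "YY = mat2_mult XX XX"
          then have "\<rho> h1 = {mat2_mult XX (mat2_mult XX XX), mneg (mat2_mult XX (mat2_mult XX XX))}"
            unfolding h1_def using ryx assoc3 by simp
          then show ?thesis using cX one_iff one_eq by metis
        next
          assume "YY = mneg (mat2_mult XX XX)"
          then have "\<rho> h1 = {mneg (mat2_mult XX (mat2_mult XX XX)), mat2_mult XX (mat2_mult XX XX)}"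
            unfolding h1_def using ryx assoc3 by simp
          then have "\<rho> h1 = {mat2_mult XX (mat2_mult XX XX), mneg (mat2_mult XX (mat2_mult XX XX))}" by auto
          then show ?thesis using cX one_iff one_eq by metis
        qed
      qed
      define gg where "gg = (transpose 1 4 \<circ> transpose 2 5) \<circ> (transpose 5 3 \<circ> transpose (3::nat) 6)"
      have ggc: "gg \<in> carrier (alt_group n)" unfolding gg_def
        using dtr_carrier[of 1 4 2 5 n] dtr_carrier[of 5 3 3 6 n] n6 G.m_closed by (simp add: alt_group_mult)
      have "gg \<circ> h1 = h2 \<circ> gg" unfolding gg_def h1_def h2_def x_def y_def by (rule t3)
      then have eq: "\<rho> gg \<otimes>\<^bsub>PSL2 K\<^esub> \<rho> h1 = \<rho> h2 \<otimes>\<^bsub>PSL2 K\<^esub> \<rho> gg"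
        using hom_mult[OF ggc h1c] hom_mult[OF h2c ggc] by (simp add: alt_group_mult)
      have c1: "\<rho> gg \<in> carrier (PSL2 K)" "\<rho> h1 \<in> carrier (PSL2 K)" "\<rho> h2 \<in> carrier (PSL2 K)"
        using ggc h1c h2c by simp_all
      have both: "\<rho> h1 = \<one>\<^bsub>PSL2 K\<^esub> \<and> \<rho> h2 = \<one>\<^bsub>PSL2 K\<^esub>"
      proof (cases "\<rho> h1 = \<one>\<^bsub>PSL2 K\<^esub>")
        case True
        then have "\<rho> gg = \<rho> h2 \<otimes>\<^bsub>PSL2 K\<^esub> \<rho> gg" using eq H.r_one[OF c1(1)] by simp
        then have "\<rho> h2 = \<one>\<^bsub>PSL2 K\<^esub>" using H.r_cancel_one'[OF c1(1) c1(3)] by simp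
        with True show ?thesis by simp
      next
        case False
        then have h2: "\<rho> h2 = \<one>\<^bsub>PSL2 K\<^esub>" using disj by simp
        then have "\<rho> gg \<otimes>\<^bsub>PSL2 K\<^esub> \<rho> h1 = \<rho> gg" using eq H.l_one[OF c1(1)] by simp
        then have "\<rho> h1 = \<one>\<^bsub>PSL2 K\<^esub>" using H.l_cancel_one[OF c1(1) c1(2)] by simp
        with h2 show ?thesis by simp
      qed
      have "\<rho> (h1 \<circ> h2) = \<one>\<^bsub>PSL2 K\<^esub>"
        using hom_mult[OF h1c h2c] both H.l_one by (simp add: alt_group_mult)
      moreover have "h1 \<circ> h2 = cycle_of_list [4,6,5]" unfolding h1_def h2_def x_def y_def by (rule t4)
      ultimately show ?thesis using KA[of 4 6 5] n6 by auto
    qed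
  qed
qed


lemma branchB_step:
  assumes hom: "\<rho> \<in> hom (alt_group n) (PSL2 (K::'k::field itself))" and n5: "n \<ge> 5"
    and three: "(3::'k) = 0"
    and pqr: "distinct [p,q,r]" "{p,q,r} \<subseteq> {1..n}"
    and tc: "\<tau> \<in> carrier (alt_group n)" and tt: "\<tau> \<circ> \<tau> = id"
    and x3: "cycle_of_list [p,q,r] \<circ> (cycle_of_list [p,q,r] \<circ> cycle_of_list [p,q,r]) = id"
    and xt: "cycle_of_list [p,q,r] \<circ> \<tau> = \<tau> \<circ> cycle_of_list [p,q,r]"
  shows "(\<forall>\<sigma> \<in> carrier (alt_group n). \<rho> \<sigma> = \<one>\<^bsub>PSL2 K\<^esub>) \<or> \<rho> \<tau> = \<one>\<^bsub>PSL2 K\<^esub>"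
proof -
  have grp: "group (PSL2 K)" by (rule PSL2_group)
  interpret group_hom "alt_group n" "PSL2 K" \<rho>
    using hom alt_group_is_group PSL2_group by (simp add: group_hom_def group_hom_axioms_def)
  note KA = kernel_all[OF grp hom n5 pqr]
  define x where "x = cycle_of_list [p,q,r]"
  have xc: "x \<in> carrier (alt_group n)" unfolding x_def using pqr by (intro cyc_carrier) auto
  have xxc: "x \<circ> x \<in> carrier (alt_group n)" using xc G.m_closed by (simp add: alt_group_mult)
  obtain a b c d where X: "a*d - b*c = (1::'k)" "\<rho> x = {M2 a b c d, mneg (M2 a b c d)}"
    using rho_rep[OF hom xc] by blast
  obtain e f g h where Y: "e*h - f*g = (1::'k)" "\<rho> \<tau> = {M2 e f g h, mneg (M2 e f g h)}"
    using rho_rep[OF hom tc] by blast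
  define XX where "XX = M2 a b c d"
  define YY where "YY = M2 e f g h"
  have rx: "\<rho> x = {XX, mneg XX}" using X XX_def by simp
  have ry: "\<rho> \<tau> = {YY, mneg YY}" using Y YY_def by simp
  have rxx: "\<rho> (x \<circ> x) = {mat2_mult XX XX, mneg (mat2_mult XX XX)}"
    by (rule rho_mult[OF hom xc xc]) (rule rx, rule rx)
  have "\<rho> (x \<circ> (x \<circ> x)) = {mat2_mult XX (mat2_mult XX XX), mneg (mat2_mult XX (mat2_mult XX XX))}"
    by (rule rho_mult[OF hom xc xxc]) (rule rx, rule rxx)
  moreover have "x \<circ> (x \<circ> x) = id" unfolding x_def by (rule x3)
  ultimately have "{mat2_mult XX (mat2_mult XX XX), mneg (mat2_mult XX (mat2_mult XX XX))} = {mat2_id, mat2_negid}"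
    using rho_id[OF hom] by simp
  then have cX: "mat2_mult XX (mat2_mult XX XX) = mat2_id \<or> mat2_mult XX (mat2_mult XX XX) = mat2_negid"
    by (simp only: one_iff)
  have "\<rho> (\<tau> \<circ> \<tau>) = {mat2_mult YY YY, mneg (mat2_mult YY YY)}"
    by (rule rho_mult[OF hom tc tc]) (rule ry, rule ry)
  then have "{mat2_mult YY YY, mneg (mat2_mult YY YY)} = {mat2_id, mat2_negid}"
    using rho_id[OF hom] tt by simp
  then have sY: "mat2_mult YY YY = mat2_id \<or> mat2_mult YY YY = mat2_negid"
    by (simp only: one_iff)
  have rxy: "\<rho> (x \<circ> \<tau>) = {mat2_mult XX YY, mneg (mat2_mult XX YY)}"
    by (rule rho_mult[OF hom xc tc]) (rule rx, rule ry)
  have ryx: "\<rho> (\<tau> \<circ> x) = {mat2_mult YY XX, mneg (mat2_mult YY XX)}"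
    by (rule rho_mult[OF hom tc xc]) (rule ry, rule rx)
  have "{mat2_mult XX YY, mneg (mat2_mult XX YY)} = {mat2_mult YY XX, mneg (mat2_mult YY XX)}"
    using rxy ryx xt unfolding x_def by simp
  then have com: "mat2_mult XX YY = mat2_mult YY XX \<or> mat2_mult XX YY = mneg (mat2_mult YY XX)"
    by (simp add: cl_eq)
  have PB: "XX = mat2_id \<or> XX = mat2_negid \<or> YY = mat2_id \<or> YY = mat2_negid"
    using pairB[OF X(1) Y(1) cX[unfolded XX_def] sY[unfolded YY_def] com[unfolded XX_def YY_def] three]
    unfolding XX_def YY_def .
  have one_eq: "\<one>\<^bsub>PSL2 K\<^esub> = {mat2_id, mat2_negid}" by (simp add: PSL2_one)
  show ?thesis
  proof (cases "XX = mat2_id \<or> XX = mat2_negid")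
    case True
    then have "\<rho> (cycle_of_list [p,q,r]) = \<one>\<^bsub>PSL2 K\<^esub>" using rx one_eq x_def by (simp only: one_iff)
    then show ?thesis using KA by blast
  next
    case False
    then have "YY = mat2_id \<or> YY = mat2_negid" using PB by blast
    then have "\<rho> \<tau> = \<one>\<^bsub>PSL2 K\<^esub>" using ry one_eq by (simp only: one_iff)
    then show ?thesis by blast
  qed
qed

lemma branchB:
  assumes hom: "\<rho> \<in> hom (alt_group n) (PSL2 (K::'k::field itself))" and n7: "n \<ge> 7"
    and three: "(3::'k) = 0"
  shows "\<forall>\<sigma> \<in> carrier (alt_group n). \<rho> \<sigma> = \<one>\<^bsub>PSL2 K\<^esub>"
proof -
  have grp: "group (PSL2 K)" by (rule PSL2_group)
  interpret group_hom "alt_group n" "PSL2 K" \<rho>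
    using hom alt_group_is_group PSL2_group by (simp add: group_hom_def group_hom_axioms_def)
  have n5: "n \<ge> 5" using n7 by simp
  define t1 where "t1 = transpose 4 5 \<circ> transpose (6::nat) 7"
  define t2 where "t2 = transpose 4 5 \<circ> transpose (3::nat) 6"
  have t1c: "t1 \<in> carrier (alt_group n)" unfolding t1_def using n7 by (intro dtr_carrier) auto
  have t2c: "t2 \<in> carrier (alt_group n)" unfolding t2_def using n7 by (intro dtr_carrier) auto
  have s1: "(\<forall>\<sigma> \<in> carrier (alt_group n). \<rho> \<sigma> = \<one>\<^bsub>PSL2 K\<^esub>) \<or> \<rho> t1 = \<one>\<^bsub>PSL2 K\<^esub>"
  proof (rule branchB_step[OF hom n5 three, of 1 2 3 t1])
    show "t1 \<circ> t1 = id" unfolding t1_def by (rule fun_eq7) (simp_all add: transpose_def)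
    show "cycle_of_list [1, 2, 3::nat] \<circ> (cycle_of_list [1, 2, 3] \<circ> cycle_of_list [1, 2, 3]) = id" by (rule t1)
    show "cycle_of_list [1, 2, 3::nat] \<circ> t1 = t1 \<circ> cycle_of_list [1, 2, 3]" unfolding t1_def
      by (rule fun_eq7) (simp_all add: transpose_def)
  qed (use n7 t1c in auto)
  have s2: "(\<forall>\<sigma> \<in> carrier (alt_group n). \<rho> \<sigma> = \<one>\<^bsub>PSL2 K\<^esub>) \<or> \<rho> t2 = \<one>\<^bsub>PSL2 K\<^esub>"
  proof (rule branchB_step[OF hom n5 three, of 1 2 7 t2])
    show "t2 \<circ> t2 = id" unfolding t2_def by (rule fun_eq7) (simp_all add: transpose_def)
    show "cycle_of_list [1, 2, 7::nat] \<circ> (cycle_of_list [1, 2, 7] \<circ> cycle_of_list [1, 2, 7]) = id"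
      by (rule fun_eq7) (simp_all add: transpose_def)
    show "cycle_of_list [1, 2, 7::nat] \<circ> t2 = t2 \<circ> cycle_of_list [1, 2, 7]" unfolding t2_def
      by (rule fun_eq7) (simp_all add: transpose_def)
  qed (use n7 t2c in auto)
  show ?thesis
  proof (cases "\<rho> t1 = \<one>\<^bsub>PSL2 K\<^esub> \<and> \<rho> t2 = \<one>\<^bsub>PSL2 K\<^esub>")
    case False then show ?thesis using s1 s2 by blast
  next
    case True
    have "\<rho> (t1 \<circ> t2) = \<one>\<^bsub>PSL2 K\<^esub>"
      using hom_mult[OF t1c t2c] True H.l_one by (simp add: alt_group_mult)
    moreover have "t1 \<circ> t2 = cycle_of_list [3,7,6]" unfolding t1_def t2_def by (rule t5)
    ultimately show ?thesis using kernel_all[OF grp hom n5, of 3 7 6] n7 by auto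
  qed
qed


lemma three_zero_char:
  assumes "(3::'k::field) = 0" shows "CHAR('k) = 3"
proof -
  have "of_nat 3 = (0::'k)" using assms by simp
  then have d: "CHAR('k) dvd 3" by (simp only: of_nat_eq_0_iff_char_dvd)
  then have "CHAR('k) \<le> 3" using dvd_imp_le[of "CHAR('k)" 3] by simp
  moreover have "CHAR('k) \<noteq> 0"
  proof
    assume "CHAR('k) = 0" with d show False by simp
  qed
  moreover have "CHAR('k) \<noteq> 1" using CHAR_not_1[where 'a='k] by simp
  moreover have "CHAR('k) \<noteq> 2" using d by auto
  ultimately show ?thesis by linarith
qed

lemma part1:
  fixes \<rho> :: "(nat \<Rightarrow> nat) \<Rightarrow> 'k::field mat2 set"
  assumes hom: "\<rho> \<in> hom (alt_group n) (PSL2 TYPE('k))"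
    and nc: "n \<ge> 7 \<or> (n = 6 \<and> CHAR('k) \<noteq> 3)"
  shows "\<exists>\<rho>' \<in> hom (alt_group n) (SL2 TYPE('k)).
              \<forall>\<sigma> \<in> carrier (alt_group n). PSL2_proj TYPE('k) (\<rho>' \<sigma>) = \<rho> \<sigma>"
proof -
  have triv: "\<forall>\<sigma> \<in> carrier (alt_group n). \<rho> \<sigma> = \<one>\<^bsub>PSL2 TYPE('k)\<^esub>"
  proof (cases "(3::'k) = 0")
    case True
    then have "n \<ge> 7" using nc three_zero_char[OF True] by auto
    then show ?thesis by (rule branchB[OF hom _ True])
  next
    case False
    have "n \<ge> 6" using nc by auto
    then show ?thesis by (rule branchA[OF hom _ False])
  qed
  have h: "(\<lambda>\<sigma>. mat2_id) \<in> hom (alt_group n) (SL2 TYPE('k))"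
    by (rule homI) (simp_all add: SL2_def)
  have "PSL2_proj TYPE('k) mat2_id = \<one>\<^bsub>PSL2 TYPE('k)\<^esub>"
    by (simp add: PSL2_proj_def Zc_rcos PSL2_one)
  then show ?thesis using h triv by (intro bexI[of _ "\<lambda>\<sigma>. mat2_id"]) auto
qed

type_synonym cl = "nat set \<Rightarrow> real"

definition sd :: "nat set \<Rightarrow> nat set \<Rightarrow> nat set" where
  "sd A B = (A - B) \<union> (B - A)"

definition sgn1 :: "nat \<Rightarrow> nat \<Rightarrow> real" where
  "sgn1 a b = (if b < a then -1 else 1)"

definition sg :: "nat set \<Rightarrow> nat set \<Rightarrow> real" where
  "sg A B = (\<Prod>a\<in>A. \<Prod>b\<in>B. sgn1 a b)"

lemma sgn1_sq[simp]: "sgn1 a b * sgn1 a b = 1" by (simp add: sgn1_def)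

lemma prod_sd:
  fixes f :: "nat \<Rightarrow> real"
  assumes "finite A" "finite B" "\<And>x. f x * f x = 1"
  shows "prod f (sd A B) = prod f A * prod f B"
proof -
  have dA: "prod f A = prod f (A \<inter> B) * prod f (A - B)" using assms(1) by (rule prod.Int_Diff)
  have dB: "prod f B = prod f (B \<inter> A) * prod f (B - A)" using assms(2) by (rule prod.Int_Diff)
  have u: "prod f (sd A B) = prod f (A - B) * prod f (B - A)"
    unfolding sd_def using assms(1,2) by (intro prod.union_disjoint) auto
  have "prod f (A \<inter> B) * prod f (A \<inter> B) = prod (\<lambda>x. f x * f x) (A \<inter> B)"
    by (simp add: prod.distrib)
  also have "\<dots> = 1" using assms(3) by simp
  finally have sq: "prod f (A \<inter> B) * prod f (A \<inter> B) = 1" .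
  have "prod f A * prod f B = (prod f (A \<inter> B) * prod f (A \<inter> B)) * (prod f (A - B) * prod f (B - A))"
    unfolding dA dB by (simp add: Int_commute mult_ac)
  then show ?thesis using sq u by simp
qed

lemma prod_sq_one:
  fixes f :: "nat \<Rightarrow> real"
  assumes "\<And>x. f x * f x = 1" shows "prod f A * prod f A = 1"
proof -
  have "prod f A * prod f A = prod (\<lambda>x. f x * f x) A" by (simp add: prod.distrib)
  then show ?thesis using assms by simp
qed

lemma sg_sq[simp]: "sg A B * sg A B = 1"
  unfolding sg_def by (rule prod_sq_one) (rule prod_sq_one, simp)

lemma sg_sd1: "finite A \<Longrightarrow> finite A' \<Longrightarrow> sg (sd A A') B = sg A B * sg A' B"
  unfolding sg_def by (rule prod_sd) (auto intro: prod_sq_one)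

lemma sg_sd2:
  assumes "finite B" "finite B'" shows "sg A (sd B B') = sg A B * sg A B'"
proof -
  have "sg A (sd B B') = (\<Prod>a\<in>A. (\<Prod>b\<in>B. sgn1 a b) * (\<Prod>b\<in>B'. sgn1 a b))"
    unfolding sg_def using assms by (intro prod.cong refl prod_sd) auto
  then show ?thesis unfolding sg_def by (simp add: prod.distrib)
qed

lemma sd_finite[simp]: "finite A \<Longrightarrow> finite B \<Longrightarrow> finite (sd A B)" by (simp add: sd_def)
lemma sd_sub: "A \<subseteq> X \<Longrightarrow> B \<subseteq> X \<Longrightarrow> sd A B \<subseteq> X" by (auto simp: sd_def)
lemma sd_self_left[simp]: "sd A (sd A B) = B" by (auto simp: sd_def)
lemma sd_assoc: "sd (sd A B) C = sd A (sd B C)" by (auto simp: sd_def)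
lemma sd_comm: "sd A B = sd B A" by (auto simp: sd_def)
lemma sd_empty[simp]: "sd {} A = A" "sd A {} = A" "sd A A = {}" by (auto simp: sd_def)
lemma sg_empty[simp]: "sg {} A = 1" "sg A {} = 1" by (simp_all add: sg_def)

definition cm :: "nat \<Rightarrow> cl \<Rightarrow> cl \<Rightarrow> cl" where
  "cm n x y = (\<lambda>T. if T \<subseteq> {1..n} then \<Sum>S\<in>Pow {1..n}. x S * y (sd S T) * sg S (sd S T) else 0)"

lemma sign_identity:
  assumes "finite S" "finite R" "finite U"
  shows "sg S R * sg (sd S R) (sd (sd S R) U) = sg R (sd R (sd S U)) * sg S (sd S U)"
  using assms
  by (simp add: sg_sd1 sg_sd2 mult_ac)


lemma sd_Pow: "S \<in> Pow X \<Longrightarrow> T \<in> Pow X \<Longrightarrow> sd S T \<in> Pow X" by (auto simp: sd_def)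

lemma sd_rot: "sd (sd S R) U = sd R (sd S U)" by (auto simp: sd_def)

lemma cm_assoc: "cm n (cm n x y) z = cm n x (cm n y z)"
proof
  fix U
  let ?P = "Pow {1..n::nat}"
  show "cm n (cm n x y) z U = cm n x (cm n y z) U"
  proof (cases "U \<subseteq> {1..n}")
    case False then show ?thesis by (simp add: cm_def)
  next
    case U: True
    have "cm n (cm n x y) z U = (\<Sum>T\<in>?P. (\<Sum>S\<in>?P. x S * y (sd S T) * sg S (sd S T)) * z (sd T U) * sg T (sd T U))"
      using U by (simp add: cm_def)
    also have "\<dots> = (\<Sum>T\<in>?P. \<Sum>S\<in>?P. x S * y (sd S T) * sg S (sd S T) * z (sd T U) * sg T (sd T U))"
      by (simp add: sum_distrib_right)
    also have "\<dots> = (\<Sum>S\<in>?P. \<Sum>T\<in>?P. x S * y (sd S T) * sg S (sd S T) * z (sd T U) * sg T (sd T U))"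
      by (rule sum.swap)
    also have "\<dots> = (\<Sum>S\<in>?P. \<Sum>R\<in>?P. x S * y R * sg S R * z (sd (sd S R) U) * sg (sd S R) (sd (sd S R) U))"
    proof (rule sum.cong[OF refl])
      fix S assume S: "S \<in> ?P"
      show "(\<Sum>T\<in>?P. x S * y (sd S T) * sg S (sd S T) * z (sd T U) * sg T (sd T U)) =
            (\<Sum>R\<in>?P. x S * y R * sg S R * z (sd (sd S R) U) * sg (sd S R) (sd (sd S R) U))"
        by (rule sum.reindex_bij_witness[of _ "sd S" "sd S"]) (use S in \<open>auto simp: sd_sub\<close>)
    qed
    also have "\<dots> = (\<Sum>S\<in>?P. \<Sum>R\<in>?P. x S * y R * z (sd R (sd S U)) * sg R (sd R (sd S U)) * sg S (sd S U))"
    proof (intro sum.cong refl)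
      fix S R assume S: "S \<in> ?P" and R: "R \<in> ?P"
      have f: "finite S" "finite R" "finite U"
        using S R U finite_subset[OF _ finite_atLeastAtMost] by blast+
      show "x S * y R * sg S R * z (sd (sd S R) U) * sg (sd S R) (sd (sd S R) U) =
            x S * y R * z (sd R (sd S U)) * sg R (sd R (sd S U)) * sg S (sd S U)"
        using sign_identity[OF f] unfolding sd_rot by (simp add: mult_ac)
    qed
    also have "\<dots> = (\<Sum>S\<in>?P. x S * (\<Sum>R\<in>?P. y R * z (sd R (sd S U)) * sg R (sd R (sd S U))) * sg S (sd S U))"
      by (simp add: sum_distrib_left sum_distrib_right mult_ac)
    also have "\<dots> = cm n x (cm n y z) U"
      using U by (auto simp: cm_def sd_sub intro!: sum.cong)
    finally show ?thesis .
  qed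
qed


definition c1 :: cl where "c1 = (\<lambda>S. if S = {} then 1 else 0)"
definition ge :: "nat \<Rightarrow> cl" where "ge i = (\<lambda>S. if S = {i} then 1 else 0)"
definition sc :: "real \<Rightarrow> cl \<Rightarrow> cl" where "sc c x = (\<lambda>S. c * x S)"
definition ad :: "cl \<Rightarrow> cl \<Rightarrow> cl" where "ad x y = (\<lambda>S. x S + y S)"
definition supp :: "nat \<Rightarrow> cl \<Rightarrow> bool" where "supp n x \<longleftrightarrow> (\<forall>S. \<not> S \<subseteq> {1..n} \<longrightarrow> x S = 0)"
definition par :: "bool \<Rightarrow> cl \<Rightarrow> bool" where "par p x \<longleftrightarrow> (\<forall>S. x S \<noteq> 0 \<longrightarrow> odd (card S) = p)"

lemma cm_supp[simp]: "supp n (cm n x y)" by (simp add: supp_def cm_def)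

lemma sum_ind: "finite A \<Longrightarrow> a \<in> A \<Longrightarrow> (\<Sum>S\<in>A. (if S = a then (1::real) else 0) * F S) = F a"
proof -
  assume f: "finite A" and a: "a \<in> A"
  have "(\<Sum>S\<in>A. (if S = a then (1::real) else 0) * F S) = (\<Sum>S\<in>A. if S = a then F a else 0)"
    by (rule sum.cong) auto
  then show ?thesis using f a by simp
qed

lemma sd_eq_empty[simp]: "sd S T = {} \<longleftrightarrow> S = T" by (auto simp: sd_def)
lemma sd_cancel2[simp]: "sd (sd T A) T = A" by (auto simp: sd_def)
lemma sd_eq_single: "sd S T = {i} \<longleftrightarrow> S = sd T {i}" by (auto simp: sd_def)
lemma sg_single: "sg {i} {j} = sgn1 i j" by (simp add: sg_def)

lemma cm_c1_left: assumes "supp n x" shows "cm n c1 x = x"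
proof
  fix T show "cm n c1 x T = x T"
  proof (cases "T \<subseteq> {1..n}")
    case True
    have "cm n c1 x T = (\<Sum>S\<in>Pow {1..n}. (if S = {} then 1 else 0) * (x (sd S T) * sg S (sd S T)))"
      using True unfolding cm_def c1_def by (simp add: mult.assoc)
    also have "\<dots> = x T" by (subst sum_ind) auto
    finally show ?thesis .
  next
    case False then show ?thesis using assms by (simp add: cm_def supp_def)
  qed
qed

lemma cm_c1_right: assumes "supp n x" shows "cm n x c1 = x"
proof
  fix T show "cm n x c1 T = x T"
  proof (cases "T \<subseteq> {1..n}")
    case True
    have "cm n x c1 T = (\<Sum>S\<in>Pow {1..n}. (if S = T then 1 else 0) * (x S * sg S (sd S T)))"
      using True unfolding cm_def c1_def by (auto intro!: sum.cong)
    also have "\<dots> = x T" using True by (subst sum_ind) auto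
    finally show ?thesis .
  next
    case False then show ?thesis using assms by (simp add: cm_def supp_def)
  qed
qed

lemma cm_ge_left:
  assumes "i \<in> {1..n}" "T \<subseteq> {1..n}"
  shows "cm n (ge i) y T = y (sd {i} T) * sg {i} (sd {i} T)"
proof -
  have "cm n (ge i) y T = (\<Sum>S\<in>Pow {1..n}. (if S = {i} then 1 else 0) * (y (sd S T) * sg S (sd S T)))"
    using assms(2) unfolding cm_def ge_def by (simp add: mult.assoc)
  also have "\<dots> = y (sd {i} T) * sg {i} (sd {i} T)" using assms(1) by (subst sum_ind) auto
  finally show ?thesis .
qed

lemma cm_ge_right:
  assumes "i \<in> {1..n}" "T \<subseteq> {1..n}"
  shows "cm n x (ge i) T = x (sd T {i}) * sg (sd T {i}) {i}"
proof -
  have "cm n x (ge i) T = (\<Sum>S\<in>Pow {1..n}. (if S = sd T {i} then 1 else 0) * (x S * sg S {i}))"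
    using assms(2) unfolding cm_def ge_def by (auto intro!: sum.cong simp: sd_eq_single)
  also have "\<dots> = x (sd T {i}) * sg (sd T {i}) {i}" using assms by (subst sum_ind) (auto simp: sd_sub)
  finally show ?thesis .
qed

lemma cm_ad_left: "cm n (ad x y) z = ad (cm n x z) (cm n y z)"
  by (auto simp: cm_def ad_def algebra_simps sum.distrib)
lemma cm_ad_right: "cm n z (ad x y) = ad (cm n z x) (cm n z y)"
  by (auto simp: cm_def ad_def algebra_simps sum.distrib)
lemma cm_sc_left: "cm n (sc c x) y = sc c (cm n x y)"
  by (auto simp: cm_def sc_def sum_distrib_left mult_ac)
lemma cm_sc_right: "cm n x (sc c y) = sc c (cm n x y)"
  by (auto simp: cm_def sc_def sum_distrib_left mult_ac)
lemma sc_sc[simp]: "sc a (sc b x) = sc (a*b) x" by (simp add: sc_def mult_ac)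
lemma sc_one[simp]: "sc 1 x = x" by (simp add: sc_def)

lemma cm_ge_ge:
  assumes "i \<in> {1..n}" "j \<in> {1..n}"
  shows "cm n (ge i) (ge j) = (\<lambda>T. if T = sd {i} {j} then sgn1 i j else 0)"
proof
  fix T
  have ij: "sd {i} {j} \<subseteq> {1..n}" using assms by (auto simp: sd_def)
  show "cm n (ge i) (ge j) T = (if T = sd {i} {j} then sgn1 i j else 0)"
  proof (cases "T \<subseteq> {1..n}")
    case True
    have e: "(sd {i} T = {j}) = (T = sd {i} {j})" by (auto simp: sd_def)
    show ?thesis using cm_ge_left[OF assms(1) True] e by (auto simp: ge_def sg_single)
  next
    case False then show ?thesis using ij by (auto simp: cm_def)
  qed
qed

lemma sgn1_same[simp]: "sgn1 i i = 1" by (simp add: sgn1_def)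

lemma ge_sq: "i \<in> {1..n} \<Longrightarrow> cm n (ge i) (ge i) = c1"
proof -
  assume i: "i \<in> {1..n}"
  have "cm n (ge i) (ge i) = (\<lambda>T. if T = sd {i} {i} then sgn1 i i else 0)" by (rule cm_ge_ge[OF i i])
  also have "\<dots> = c1" unfolding c1_def sgn1_def by simp
  finally show ?thesis .
qed

lemma ge_anti: "i \<in> {1..n} \<Longrightarrow> j \<in> {1..n} \<Longrightarrow> i \<noteq> j \<Longrightarrow> cm n (ge i) (ge j) = sc (-1) (cm n (ge j) (ge i))"
  by (auto simp: cm_ge_ge sc_def sgn1_def sd_comm fun_eq_iff)


definition vv :: "nat \<Rightarrow> nat \<Rightarrow> cl" where "vv a b = ad (ge a) (sc (-1) (ge b))"

lemmas cm_lin = cm_ad_left cm_ad_right cm_sc_left cm_sc_right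

lemma refl_ge:
  assumes ab: "a \<noteq> b" "a \<in> {1..n}" "b \<in> {1..n}" and i: "i \<in> {1..n}"
  shows "cm n (vv a b) (ge i) = sc (-1) (cm n (ge (transpose a b i)) (vv a b))"
proof -
  consider "i = a" | "i = b" | "i \<noteq> a" "i \<noteq> b" by blast
  then show ?thesis
  proof cases
    case 1
    show ?thesis unfolding vv_def cm_lin 1 using ab
      by (simp add: ge_sq fun_eq_iff ad_def sc_def)
  next
    case 2
    show ?thesis unfolding vv_def cm_lin 2 using ab
      by (simp add: ge_sq fun_eq_iff ad_def sc_def)
  next
    case 3
    have t: "transpose a b i = i" using 3 by simp
    have a1: "cm n (ge a) (ge i) = sc (-1) (cm n (ge i) (ge a))" using ge_anti ab i 3 by metis
    have a2: "cm n (ge b) (ge i) = sc (-1) (cm n (ge i) (ge b))" using ge_anti ab i 3 by metis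
    show ?thesis unfolding t vv_def cm_lin a1 a2
      by (simp add: fun_eq_iff ad_def sc_def)
  qed
qed


lemma supp_ge: "i \<in> {1..n} \<Longrightarrow> supp n (ge i)" by (auto simp: supp_def ge_def)
lemma supp_c1: "supp n c1" by (auto simp: supp_def c1_def)
lemma supp_sc: "supp n x \<Longrightarrow> supp n (sc c x)" by (auto simp: supp_def sc_def)
lemma supp_ad: "supp n x \<Longrightarrow> supp n y \<Longrightarrow> supp n (ad x y)" by (auto simp: supp_def ad_def)
lemma supp_vv: "a \<in> {1..n} \<Longrightarrow> b \<in> {1..n} \<Longrightarrow> supp n (vv a b)"
  by (simp add: vv_def supp_ad supp_sc supp_ge)

lemma vv_sq:
  assumes ab: "a \<noteq> b" "a \<in> {1..n}" "b \<in> {1..n}"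
  shows "cm n (vv a b) (vv a b) = sc 2 c1"
proof -
  have a1: "cm n (ge a) (ge b) = sc (-1) (cm n (ge b) (ge a))" using ge_anti ab by metis
  show ?thesis unfolding vv_def cm_lin a1 using ab
    by (simp add: ge_sq fun_eq_iff ad_def sc_def)
qed

lemma transpose_in: "a \<in> X \<Longrightarrow> b \<in> X \<Longrightarrow> i \<in> X \<Longrightarrow> transpose a b i \<in> X"
  by (simp add: transpose_def)

lemma lift2_conj:
  assumes pq: "p \<noteq> q" "p \<in> {1..n}" "q \<in> {1..n}" and rs: "r \<noteq> s" "r \<in> {1..n}" "s \<in> {1..n}"
    and i: "i \<in> {1..n}"
  shows "cm n (cm n (vv p q) (vv r s)) (ge i) = cm n (ge (transpose p q (transpose r s i))) (cm n (vv p q) (vv r s))"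
proof -
  have j: "transpose r s i \<in> {1..n}" by (rule transpose_in[OF rs(2,3) i])
  have "cm n (cm n (vv p q) (vv r s)) (ge i) = cm n (vv p q) (cm n (vv r s) (ge i))" by (rule cm_assoc)
  also have "\<dots> = sc (-1) (cm n (cm n (vv p q) (ge (transpose r s i))) (vv r s))"
    unfolding refl_ge[OF rs i] cm_sc_right cm_assoc ..
  also have "\<dots> = cm n (ge (transpose p q (transpose r s i))) (cm n (vv p q) (vv r s))"
    unfolding refl_ge[OF pq j] cm_sc_left cm_assoc by simp
  finally show ?thesis .
qed

lemma lift2_inv:
  assumes pq: "p \<noteq> q" "p \<in> {1..n}" "q \<in> {1..n}" and rs: "r \<noteq> s" "r \<in> {1..n}" "s \<in> {1..n}"
  shows "cm n (cm n (vv p q) (vv r s)) (cm n (vv r s) (vv p q)) = sc 4 c1"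
proof -
  have "cm n (cm n (vv p q) (vv r s)) (cm n (vv r s) (vv p q)) = cm n (vv p q) (cm n (cm n (vv r s) (vv r s)) (vv p q))"
    by (simp add: cm_assoc)
  also have "\<dots> = sc 2 (cm n (vv p q) (vv p q))"
    unfolding vv_sq[OF rs] cm_sc_left cm_sc_right cm_c1_left[OF supp_vv[OF pq(2,3)]] ..
  also have "\<dots> = sc 4 c1" unfolding vv_sq[OF pq] by simp
  finally show ?thesis .
qed


lemma card_sd:
  assumes "finite S" "finite T"
  shows "card (sd S T) + 2 * card (S \<inter> T) = card S + card T"
proof -
  have "card (sd S T) = card (S - T) + card (T - S)"
    unfolding sd_def using assms by (intro card_Un_disjoint) auto
  moreover have "card S = card (S \<inter> T) + card (S - T)" using assms(1) by (rule card_Int_Diff)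
  moreover have "card T = card (T \<inter> S) + card (T - S)" using assms(2) by (rule card_Int_Diff)
  ultimately show ?thesis by (simp add: Int_commute)
qed

lemma odd_card_sd:
  assumes "finite S" "finite T"
  shows "odd (card (sd S T)) \<longleftrightarrow> (odd (card S) \<noteq> odd (card T))"
proof -
  have "card (sd S T) + 2 * card (S \<inter> T) = card S + card T" by (rule card_sd[OF assms])
  then show ?thesis by presburger
qed

lemma par_cm:
  assumes "par p x" "par q y" shows "par (p \<noteq> q) (cm n x y)"
  unfolding par_def
proof (intro allI impI)
  fix T assume nz: "cm n x y T \<noteq> 0"
  then have T: "T \<subseteq> {1..n}" by (auto simp: cm_def split: if_splits)
  then have "(\<Sum>S\<in>Pow {1..n}. x S * y (sd S T) * sg S (sd S T)) \<noteq> 0" using nz by (simp add: cm_def)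
  then obtain S where S: "S \<in> Pow {1..n}" "x S * y (sd S T) * sg S (sd S T) \<noteq> 0"
    by (meson sum.not_neutral_contains_not_neutral)
  then have "x S \<noteq> 0" "y (sd S T) \<noteq> 0" by auto
  then have o: "odd (card S) = p" "odd (card (sd S T)) = q" using assms by (auto simp: par_def)
  have f: "finite S" "finite T" using S(1) T finite_subset by auto
  show "odd (card T) = (p \<noteq> q)" using odd_card_sd[OF f] o by auto
qed

lemma par_ge: "par True (ge i)" by (auto simp: par_def ge_def)
lemma par_c1: "par False c1" by (auto simp: par_def c1_def)
lemma par_sc: "par p x \<Longrightarrow> par p (sc c x)" by (auto simp: par_def sc_def)
lemma par_ad: "par p x \<Longrightarrow> par p y \<Longrightarrow> par p (ad x y)"
  unfolding par_def ad_def by (metis add.right_neutral add_0)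
lemma par_vv: "par True (vv a b)" by (simp add: vv_def par_ad par_sc par_ge)


lemma sgn1_swap: "sgn1 a i * sgn1 i a = (if a = i then 1 else -1)"
  by (auto simp: sgn1_def)

lemma sg_anti:
  assumes T: "finite T" "i \<in> T" "even (card T)"
  shows "sg T {i} * sg {i} T = -1"
proof -
  have "sg T {i} * sg {i} T = (\<Prod>a\<in>T. sgn1 a i * sgn1 i a)"
    by (simp add: sg_def prod.distrib)
  also have "\<dots> = (\<Prod>a\<in>T. if a = i then 1 else -1)" by (simp add: sgn1_swap)
  also have "\<dots> = (\<Prod>a\<in>T - {i}. if a = i then 1 else -1)"
    using T by (subst prod.remove[of T i]) auto
  also have "\<dots> = (\<Prod>a\<in>T - {i}. -1)" by (rule prod.cong) auto
  also have "\<dots> = (-1) ^ card (T - {i})" by simp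
  also have "card (T - {i}) = card T - 1" using T by simp
  also have "card T > 0" using T card_gt_0_iff by blast
  then have "odd (card T - 1)" using T(3) by (cases "card T") auto
  then have "(-1::real) ^ (card T - 1) = -1" by simp
  finally show ?thesis .
qed

lemma center:
  assumes su: "supp n w" and pa: "par False w"
    and cmt: "\<forall>i\<in>{1..n}. cm n w (ge i) = cm n (ge i) w"
  shows "w = sc (w {}) c1"
proof
  fix T show "w T = sc (w {}) c1 T"
  proof (cases "T = {}")
    case True then show ?thesis by (simp add: sc_def c1_def)
  next
    case ne: False
    have "w T = 0"
    proof (rule ccontr)
      assume nz: "w T \<noteq> 0"
      then have Tn: "T \<subseteq> {1..n}" using su by (auto simp: supp_def)
      have ev: "even (card T)" using nz pa by (auto simp: par_def)
      obtain i where i: "i \<in> T" using ne by blast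
      have iN: "i \<in> {1..n}" using i Tn by auto
      have fT: "finite T" using Tn finite_subset by auto
      define T' where "T' = sd T {i}"
      have T'n: "T' \<subseteq> {1..n}" unfolding T'_def using Tn iN by (intro sd_sub) auto
      have "cm n w (ge i) T' = cm n (ge i) w T'" using cmt iN by simp
      moreover have "cm n w (ge i) T' = w T * sg T {i}"
        using cm_ge_right[OF iN T'n] unfolding T'_def by (simp add: sd_assoc)
      moreover have "sd {i} T' = T" unfolding T'_def by (auto simp: sd_def)
      then have "cm n (ge i) w T' = w T * sg {i} T"
        using cm_ge_left[OF iN T'n] by simp
      ultimately have "sg T {i} = sg {i} T" using nz by simp
      then have "sg T {i} * sg {i} T = 1" by (metis sg_sq)
      then show False using sg_anti[OF fT i ev] by simp
    qed
    then show ?thesis using ne by (simp add: sc_def c1_def)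
  qed
qed


definition Lift :: "nat \<Rightarrow> (nat \<Rightarrow> nat) \<Rightarrow> cl set" where
  "Lift n g = {u. supp n u \<and> par False u \<and>
     (\<exists>v. supp n v \<and> par False v \<and> cm n u v = c1 \<and> cm n v u = c1) \<and>
     (\<forall>i\<in>{1..n}. cm n u (ge i) = cm n (ge (g i)) u)}"

lemma Lift_one: "c1 \<in> Lift n id"
proof -
  have "cm n c1 c1 = c1" by (rule cm_c1_left[OF supp_c1])
  moreover have "\<forall>i\<in>{1..n}. cm n c1 (ge i) = cm n (ge (id i)) c1"
    using cm_c1_left cm_c1_right supp_ge by simp
  ultimately show ?thesis unfolding Lift_def using supp_c1 par_c1 by blast
qed

lemma lift2_mem:
  assumes pq: "p \<noteq> q" "p \<in> {1..n}" "q \<in> {1..n}" and rs: "r \<noteq> s" "r \<in> {1..n}" "s \<in> {1..n}"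
  shows "cm n (vv p q) (vv r s) \<in> Lift n (transpose p q \<circ> transpose r s)"
proof -
  let ?u = "cm n (vv p q) (vv r s)"
  let ?v = "sc (1/4) (cm n (vv r s) (vv p q))"
  have pu: "par False ?u" using par_cm[OF par_vv par_vv] by simp
  have pv: "par False ?v" using par_sc[OF par_cm[OF par_vv par_vv]] by simp
  have sv: "supp n ?v" by (rule supp_sc[OF cm_supp])
  have "cm n ?u ?v = c1" unfolding cm_sc_right lift2_inv[OF pq rs] by simp
  moreover have "cm n ?v ?u = c1" unfolding cm_sc_left lift2_inv[OF rs pq] by simp
  moreover have "\<forall>i\<in>{1..n}. cm n ?u (ge i) = cm n (ge ((transpose p q \<circ> transpose r s) i)) ?u"
    using lift2_conj[OF pq rs] by simp
  moreover have "supp n ?u" by simp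
  ultimately show ?thesis unfolding Lift_def using pu pv sv by blast
qed

lemma Lift_mult:
  assumes u: "u \<in> Lift n g" and u': "u' \<in> Lift n h" and hr: "\<forall>i\<in>{1..n}. h i \<in> {1..n}"
  shows "cm n u u' \<in> Lift n (g \<circ> h)"
proof -
  obtain v where v: "supp n v" "par False v" "cm n u v = c1" "cm n v u = c1"
    using u unfolding Lift_def by blast
  obtain v' where v': "supp n v'" "par False v'" "cm n u' v' = c1" "cm n v' u' = c1"
    using u' unfolding Lift_def by blast
  have pu: "par False u" "par False u'" using u u' unfolding Lift_def by auto
  have su: "supp n u" "supp n u'" using u u' unfolding Lift_def by auto
  have cu: "\<forall>i\<in>{1..n}. cm n u (ge i) = cm n (ge (g i)) u" "\<forall>i\<in>{1..n}. cm n u' (ge i) = cm n (ge (h i)) u'"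
    using u u' unfolding Lift_def by auto
  have "par False (cm n u u')" using par_cm[OF pu] by simp
  moreover have "par False (cm n v' v)" using par_cm[OF v'(2) v(2)] by simp
  moreover have "cm n (cm n u u') (cm n v' v) = c1"
  proof -
    have "cm n (cm n u u') (cm n v' v) = cm n u (cm n (cm n u' v') v)" by (simp only: cm_assoc)
    also have "\<dots> = c1" by (simp only: v'(3) cm_c1_left[OF v(1)] v(3))
    finally show ?thesis .
  qed
  moreover have "cm n (cm n v' v) (cm n u u') = c1"
  proof -
    have "cm n (cm n v' v) (cm n u u') = cm n v' (cm n (cm n v u) u')" by (simp only: cm_assoc)
    also have "\<dots> = c1" by (simp only: v(4) cm_c1_left[OF su(2)] v'(4))
    finally show ?thesis .
  qed
  moreover have "\<forall>i\<in>{1..n}. cm n (cm n u u') (ge i) = cm n (ge ((g \<circ> h) i)) (cm n u u')"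
  proof
    fix i assume i: "i \<in> {1..n}"
    have "cm n (cm n u u') (ge i) = cm n u (cm n (ge (h i)) u')" using cu(2) i by (simp add: cm_assoc)
    also have "\<dots> = cm n (cm n (ge (g (h i))) u) u'" using cu(1) hr i by (simp add: cm_assoc[symmetric])
    finally show "cm n (cm n u u') (ge i) = cm n (ge ((g \<circ> h) i)) (cm n u u')" by (simp add: cm_assoc)
  qed
  ultimately show ?thesis unfolding Lift_def using v v' by (auto intro!: exI[of _ "cm n v' v"])
qed


lemma Lift_inv:
  assumes u: "u \<in> Lift n g" and g: "g permutes {1..n}"
  shows "Lift n (inv' g) \<noteq> {}"
proof -
  obtain v where v: "supp n v" "par False v" "cm n u v = c1" "cm n v u = c1"
    using u unfolding Lift_def by blast
  have pu: "par False u" and su: "supp n u" and cu: "\<forall>i\<in>{1..n}. cm n u (ge i) = cm n (ge (g i)) u"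
    using u unfolding Lift_def by auto
  have "\<forall>i\<in>{1..n}. cm n v (ge i) = cm n (ge (inv' g i)) v"
  proof
    fix i assume i: "i \<in> {1..n}"
    define j where "j = inv' g i"
    have j1: "j \<in> {1..n}" unfolding j_def using i by (simp only: permutes_in_image[OF permutes_inv[OF g]])
    have j2: "g j = i" unfolding j_def by (rule permutes_inverses(1)[OF g])
    note j = j1 j2
    have e: "cm n u (ge j) = cm n (ge i) u" using cu j by auto
    have "cm n v (ge i) = cm n (cm n v (ge i)) (cm n u v)" by (simp add: v(3) cm_c1_right)
    also have "\<dots> = cm n v (cm n (cm n (ge i) u) v)" by (simp only: cm_assoc)
    also have "\<dots> = cm n (cm n v u) (cm n (ge j) v)" by (simp only: e[symmetric] cm_assoc)
    also have "\<dots> = cm n (ge j) v" by (simp add: v(4) cm_c1_left)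
    finally show "cm n v (ge i) = cm n (ge (inv' g i)) v" unfolding j_def .
  qed
  then have "v \<in> Lift n (inv' g)" unfolding Lift_def using v su pu by blast
  then show ?thesis by blast
qed

lemma Lift_exists:
  assumes "g \<in> carrier (alt_group n)" shows "Lift n g \<noteq> {}"
proof -
  have "g \<in> generate (alt_group n) (three_cycles n)"
    using assms alt_group_carrier_as_three_cycles by blast
  then show ?thesis
  proof (induction g rule: generate.induct)
    case one
    have "c1 \<in> Lift n id" by (rule Lift_one)
    then show ?case unfolding alt_group_one by blast
  next
    case (incl h)
    then obtain cs where cs: "h = cycle_of_list cs" "cycle cs" "length cs = 3" "set cs \<subseteq> {1..n}" by auto
    obtain a b c where abc: "cs = [a,b,c]" using stupid_lemma[OF cs(3)] by blast
    have "h = transpose a b \<circ> transpose b c" using cs abc by simp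
    moreover have "cm n (vv a b) (vv b c) \<in> Lift n (transpose a b \<circ> transpose b c)"
      using cs abc by (intro lift2_mem) auto
    ultimately show ?case by blast
  next
    case (inv h)
    have hc: "h \<in> carrier (alt_group n)" using inv three_cycles_incl by blast
    then have hp: "h permutes {1..n}" by (simp add: alt_group_carrier)
    obtain cs where cs: "h = cycle_of_list cs" "cycle cs" "length cs = 3" "set cs \<subseteq> {1..n}" using inv by auto
    obtain a b c where abc: "cs = [a,b,c]" using stupid_lemma[OF cs(3)] by blast
    have "h = transpose a b \<circ> transpose b c" using cs abc by simp
    moreover have "cm n (vv a b) (vv b c) \<in> Lift n (transpose a b \<circ> transpose b c)"
      using cs abc by (intro lift2_mem) auto
    ultimately have "Lift n (inv' h) \<noteq> {}" using Lift_inv hp by blast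
    then show ?case using alt_group_inv_equality[OF hc] by simp
  next
    case (eng h1 h2)
    obtain u1 where u1: "u1 \<in> Lift n h1" using eng by blast
    obtain u2 where u2: "u2 \<in> Lift n h2" using eng by blast
    have "h2 \<in> carrier (alt_group n)" using eng(2) alt_group_carrier_as_three_cycles by blast
    then have hp: "h2 permutes {1..n}" by (simp add: alt_group_carrier)
    have "\<forall>i\<in>{1..n}. h2 i \<in> {1..n}"
    proof
      fix i :: nat assume "i \<in> {1..n}" then show "h2 i \<in> {1..n}" by (simp only: permutes_in_image[OF hp])
    qed
    then have "cm n u1 u2 \<in> Lift n (h1 \<circ> h2)" by (rule Lift_mult[OF u1 u2])
    then show ?case unfolding alt_group_mult by blast
  qed
qed


lemma cm_zero_left: "cm n (\<lambda>S. 0) y = (\<lambda>S. 0)" by (simp add: cm_def fun_eq_iff)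

lemma c1_nonzero: "c1 \<noteq> (\<lambda>S. 0)" by (auto simp: c1_def fun_eq_iff)

lemma Lift_nonzero: "u \<in> Lift n g \<Longrightarrow> u \<noteq> (\<lambda>S. 0)"
  unfolding Lift_def using cm_zero_left c1_nonzero by force

lemma sc_cancel: "sc a u = sc b u \<Longrightarrow> u \<noteq> (\<lambda>S. 0) \<Longrightarrow> a = b"
  by (auto simp: sc_def fun_eq_iff)

lemma sc_zero: "sc 0 u = (\<lambda>S. 0)" by (simp add: sc_def)

lemma Lift_unique:
  assumes u: "u \<in> Lift n g" and u': "u' \<in> Lift n g"
  shows "\<exists>c. c \<noteq> 0 \<and> u' = sc c u"
proof -
  obtain v where v: "supp n v" "par False v" "cm n u v = c1" "cm n v u = c1"
    using u unfolding Lift_def by blast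
  have su: "supp n u" "supp n u'" and pu: "par False u'"
    and cu: "\<forall>i\<in>{1..n}. cm n u (ge i) = cm n (ge (g i)) u"
    and cu': "\<forall>i\<in>{1..n}. cm n u' (ge i) = cm n (ge (g i)) u'"
    using u u' unfolding Lift_def by auto
  define w where "w = cm n v u'"
  have vi: "cm n (ge i) v = cm n v (ge (g i))" if i: "i \<in> {1..n}" for i
  proof -
    have "cm n v (ge (g i)) = cm n (cm n v (ge (g i))) (cm n u v)" by (simp add: v(3) cm_c1_right)
    also have "\<dots> = cm n v (cm n (cm n (ge (g i)) u) v)" by (simp only: cm_assoc)
    also have "\<dots> = cm n v (cm n (cm n u (ge i)) v)" using cu i by simp
    also have "\<dots> = cm n (cm n v u) (cm n (ge i) v)" by (simp only: cm_assoc)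
    also have "\<dots> = cm n (ge i) v" by (simp add: v(4) cm_c1_left)
    finally show ?thesis by simp
  qed
  have "\<forall>i\<in>{1..n}. cm n w (ge i) = cm n (ge i) w"
  proof
    fix i assume i: "i \<in> {1..n}"
    have "cm n w (ge i) = cm n v (cm n (ge (g i)) u')" unfolding w_def using cu' i by (simp add: cm_assoc)
    also have "\<dots> = cm n (cm n (ge i) v) u'" using vi[OF i] by (simp add: cm_assoc)
    finally show "cm n w (ge i) = cm n (ge i) w" unfolding w_def by (simp add: cm_assoc)
  qed
  moreover have "par False w" unfolding w_def using par_cm[OF v(2) pu] by simp
  moreover have "supp n w" unfolding w_def by simp
  ultimately have wc: "w = sc (w {}) c1" by (intro center)
  have "u' = cm n (cm n u v) u'" by (simp add: v(3) cm_c1_left su(2))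
  also have "\<dots> = cm n u w" unfolding w_def by (simp add: cm_assoc)
  also have "\<dots> = sc (w {}) u" by (subst wc) (simp add: cm_sc_right cm_c1_right su(1))
  finally have eq: "u' = sc (w {}) u" .
  moreover have "w {} \<noteq> 0"
  proof
    assume "w {} = 0"
    then have "u' = (\<lambda>S. 0)" using eq sc_zero by simp
    then show False using Lift_nonzero[OF u'] by simp
  qed
  ultimately show ?thesis by blast
qed


definition LL :: "nat \<Rightarrow> (nat \<Rightarrow> nat) \<Rightarrow> cl" where "LL n g = (SOME u. u \<in> Lift n g)"

definition mu :: "nat \<Rightarrow> (nat \<Rightarrow> nat) \<Rightarrow> (nat \<Rightarrow> nat) \<Rightarrow> real" where
  "mu n g h = (SOME c. c \<noteq> 0 \<and> cm n (LL n g) (LL n h) = sc c (LL n (g \<circ> h)))"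

definition fco :: "nat \<Rightarrow> (nat \<Rightarrow> nat) \<Rightarrow> (nat \<Rightarrow> nat) \<Rightarrow> bool" where
  "fco n g h = (g \<in> carrier (alt_group n) \<and> h \<in> carrier (alt_group n) \<and> mu n g h < 0)"

lemma alt_comp_closed: "g \<in> carrier (alt_group n) \<Longrightarrow> h \<in> carrier (alt_group n) \<Longrightarrow> g \<circ> h \<in> carrier (alt_group n)"
  using monoid.m_closed[OF group.is_monoid[OF alt_group_is_group]] by (metis alt_group_mult)

lemma LL_mem: "g \<in> carrier (alt_group n) \<Longrightarrow> LL n g \<in> Lift n g"
  unfolding LL_def using Lift_exists by (metis ex_in_conv someI_ex)

lemma mu_prop:
  assumes g: "g \<in> carrier (alt_group n)" and h: "h \<in> carrier (alt_group n)"
  shows "mu n g h \<noteq> 0 \<and> cm n (LL n g) (LL n h) = sc (mu n g h) (LL n (g \<circ> h))"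
proof -
  have hp: "h permutes {1..n}" using h by (simp add: alt_group_carrier)
  have hr: "\<forall>i\<in>{1..n}. h i \<in> {1..n}"
  proof
    fix i :: nat assume "i \<in> {1..n}" then show "h i \<in> {1..n}" by (simp only: permutes_in_image[OF hp])
  qed
  have "cm n (LL n g) (LL n h) \<in> Lift n (g \<circ> h)" by (rule Lift_mult[OF LL_mem[OF g] LL_mem[OF h] hr])
  moreover have "g \<circ> h \<in> carrier (alt_group n)" using g h by (rule alt_comp_closed)
  ultimately have "\<exists>c. c \<noteq> 0 \<and> cm n (LL n g) (LL n h) = sc c (LL n (g \<circ> h))"
    using Lift_unique LL_mem by blast
  then show ?thesis unfolding mu_def by (rule someI_ex)
qed

lemma sign_xor:
  fixes a b c d :: real
  assumes "a \<noteq> 0" "b \<noteq> 0" "c \<noteq> 0" "d \<noteq> 0" "a * b = c * d"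
  shows "((c < 0) \<noteq> (b < 0)) = ((d < 0) \<noteq> (a < 0))"
proof -
  have "(a * b < 0) = (c * d < 0)" using assms(5) by simp
  then have "((a < 0) \<noteq> (b < 0)) = ((c < 0) \<noteq> (d < 0))"
    using assms(1-4) by (auto simp: mult_less_0_iff)
  then show ?thesis by blast
qed

lemma fco_cocycle: "fco n \<in> cocycles2_Z2 (alt_group n)"
  unfolding cocycles2_Z2_def
proof (intro CollectI conjI allI impI ballI)
  fix x y assume "x \<notin> carrier (alt_group n) \<or> y \<notin> carrier (alt_group n)"
  then show "\<not> fco n x y" by (auto simp: fco_def)
next
  fix g h k assume g: "g \<in> carrier (alt_group n)" and h: "h \<in> carrier (alt_group n)" and k: "k \<in> carrier (alt_group n)"
  have gh: "g \<circ> h \<in> carrier (alt_group n)" and hk: "h \<circ> k \<in> carrier (alt_group n)"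
    using g h k alt_comp_closed by blast+
  have ghk: "g \<circ> h \<circ> k \<in> carrier (alt_group n)" using gh k by (rule alt_comp_closed)
  note m1 = mu_prop[OF g h] and m2 = mu_prop[OF gh k] and m3 = mu_prop[OF h k] and m4 = mu_prop[OF g hk]
  have "cm n (cm n (LL n g) (LL n h)) (LL n k) = sc (mu n g h * mu n (g \<circ> h) k) (LL n (g \<circ> h \<circ> k))"
    using m1 m2 by (simp add: cm_sc_left)
  moreover have "cm n (LL n g) (cm n (LL n h) (LL n k)) = sc (mu n h k * mu n g (h \<circ> k)) (LL n (g \<circ> h \<circ> k))"
    using m3 m4 by (simp add: cm_sc_right comp_assoc mult.commute)
  ultimately have "sc (mu n g h * mu n (g \<circ> h) k) (LL n (g \<circ> h \<circ> k)) = sc (mu n h k * mu n g (h \<circ> k)) (LL n (g \<circ> h \<circ> k))"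
    by (simp add: cm_assoc)
  then have eq: "mu n g h * mu n (g \<circ> h) k = mu n h k * mu n g (h \<circ> k)"
    using sc_cancel Lift_nonzero[OF LL_mem[OF ghk]] by blast
  have "((mu n h k < 0) \<noteq> (mu n (g \<circ> h) k < 0)) = ((mu n g (h \<circ> k) < 0) \<noteq> (mu n g h < 0))"
    using sign_xor[OF _ _ _ _ eq] m1 m2 m3 m4 by blast
  then show "(fco n h k \<noteq> fco n (g \<otimes>\<^bsub>alt_group n\<^esub> h) k) = (fco n g (h \<otimes>\<^bsub>alt_group n\<^esub> k) \<noteq> fco n g h)"
    using g h k gh hk by (simp add: fco_def alt_group_mult)
qed


lemma vv_anti:
  assumes "a \<in> {1..n}" "b \<in> {1..n}" "c \<in> {1..n}" "d \<in> {1..n}"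
    and "c \<noteq> a" "c \<noteq> b" "d \<noteq> a" "d \<noteq> b"
  shows "cm n (vv c d) (vv a b) = sc (-1) (cm n (vv a b) (vv c d))"
proof -
  have e1: "cm n (ge c) (ge a) = sc (-1) (cm n (ge a) (ge c))" using ge_anti assms by metis
  have e2: "cm n (ge c) (ge b) = sc (-1) (cm n (ge b) (ge c))" using ge_anti assms by metis
  have e3: "cm n (ge d) (ge a) = sc (-1) (cm n (ge a) (ge d))" using ge_anti assms by metis
  have e4: "cm n (ge d) (ge b) = sc (-1) (cm n (ge b) (ge d))" using ge_anti assms by metis
  show ?thesis unfolding vv_def cm_lin e1 e2 e3 e4
    by (simp add: fun_eq_iff ad_def sc_def algebra_simps)
qed

lemma u0_sq:
  assumes n4: "n \<ge> 4"
  shows "cm n (cm n (vv 1 2) (vv 3 4)) (cm n (vv 1 2) (vv 3 4)) = sc (-4) c1"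
proof -
  have r: "(1::nat) \<in> {1..n}" "(2::nat) \<in> {1..n}" "(3::nat) \<in> {1..n}" "(4::nat) \<in> {1..n}" using n4 by auto
  have an: "cm n (vv 3 4) (vv 1 2) = sc (-1) (cm n (vv 1 2) (vv 3 4))"
    by (rule vv_anti) (use r in auto)
  have "cm n (cm n (vv 1 2) (vv 3 4)) (cm n (vv 1 2) (vv 3 4)) = cm n (vv 1 2) (cm n (cm n (vv 3 4) (vv 1 2)) (vv 3 4))"
    by (simp only: cm_assoc)
  also have "\<dots> = sc (-1) (cm n (cm n (vv 1 2) (vv 1 2)) (cm n (vv 3 4) (vv 3 4)))"
    unfolding an cm_sc_left cm_sc_right by (simp only: cm_assoc)
  also have "\<dots> = sc (-4) c1"
    using vv_sq[of 1 2 n] vv_sq[of 3 4 n] r by (simp add: cm_sc_left cm_sc_right cm_c1_left supp_c1)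
  finally show ?thesis .
qed

lemma part2:
  assumes n4: "n \<ge> 4"
  shows "H2_Z2_nonzero (alt_group n)"
proof -
  define a0 where "a0 = transpose 1 2 \<circ> transpose (3::nat) 4"
  have a0c: "a0 \<in> carrier (alt_group n)" unfolding a0_def using n4 by (intro dtr_carrier) auto
  have idc: "id \<in> carrier (alt_group n)"
    using monoid.one_closed[OF group.is_monoid[OF alt_group_is_group]] by (simp add: alt_group_one)
  have aa: "a0 \<circ> a0 = id" unfolding a0_def by (rule fun_eq7) (simp_all add: transpose_def)
  have r: "(1::nat) \<in> {1..n}" "(2::nat) \<in> {1..n}" "(3::nat) \<in> {1..n}" "(4::nat) \<in> {1..n}" using n4 by auto
  obtain l0 where l0: "l0 \<noteq> 0" "LL n id = sc l0 c1"
    using Lift_unique[OF Lift_one LL_mem[OF idc]] by blast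
  have "cm n (LL n id) (LL n id) = sc (l0 * l0) c1"
    unfolding l0(2) by (simp add: cm_sc_left cm_sc_right cm_c1_left supp_c1)
  moreover have "cm n (LL n id) (LL n id) = sc (mu n id id) (LL n id)"
    using mu_prop[OF idc idc] by simp
  ultimately have "sc (mu n id id * l0) c1 = sc (l0 * l0) c1" unfolding l0(2) by (simp add: mult.commute)
  then have "mu n id id * l0 = l0 * l0" using sc_cancel c1_nonzero by blast
  then have mid: "mu n id id = l0" using l0(1) by simp
  have u0: "cm n (vv 1 2) (vv 3 4) \<in> Lift n a0" unfolding a0_def by (rule lift2_mem) (use r in auto)
  obtain t where t: "t \<noteq> 0" "LL n a0 = sc t (cm n (vv 1 2) (vv 3 4))"
    using Lift_unique[OF u0 LL_mem[OF a0c]] by blast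
  have "cm n (LL n a0) (LL n a0) = sc (-4 * (t * t)) c1"
    unfolding t(2) using u0_sq[OF n4] by (simp add: cm_sc_left cm_sc_right mult_ac)
  moreover have "cm n (LL n a0) (LL n a0) = sc (mu n a0 a0 * l0) c1"
    using mu_prop[OF a0c a0c] aa l0(2) by simp
  ultimately have "mu n a0 a0 * l0 = -4 * (t * t)" using sc_cancel c1_nonzero by metis
  moreover have "t * t > 0" using t(1) by (auto simp: zero_less_mult_iff linorder_neq_iff)
  ultimately have "mu n a0 a0 * l0 < 0" by simp
  then have diff: "(mu n a0 a0 < 0) \<noteq> (mu n id id < 0)" unfolding mid using l0(1)
    by (auto simp: mult_less_0_iff)
  have "fco n \<notin> coboundaries2_Z2 (alt_group n)"
  proof
    assume "fco n \<in> coboundaries2_Z2 (alt_group n)"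
    then obtain c :: "(nat \<Rightarrow> nat) \<Rightarrow> bool" where c: "fco n = (\<lambda>g h. if g \<in> carrier (alt_group n) \<and> h \<in> carrier (alt_group n)
                then (c h \<noteq> c (g \<otimes>\<^bsub>alt_group n\<^esub> h)) \<noteq> c g else False)"
      unfolding coboundaries2_Z2_def by blast
    have "fco n a0 a0 = c id" using c a0c aa by (simp add: alt_group_mult) blast
    moreover have "fco n id id = c id" using c idc by (simp add: alt_group_mult)
    ultimately have "fco n a0 a0 = fco n id id" by simp
    then show False using diff a0c idc by (simp add: fco_def)
  qed
  then show ?thesis unfolding H2_Z2_nonzero_def using fco_cocycle by blast
qed

theorem propositionE:
  fixes v :: "'k::field \<Rightarrow> int" and n :: nat
  assumes "nonarch_local_field v"
    and "n \<ge> 7 \<or> (n = 6 \<and> CHAR('k) \<noteq> 3)"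
  shows "(\<forall>\<rho> \<in> hom (alt_group n) (PSL2 TYPE('k)).
            \<exists>\<rho>' \<in> hom (alt_group n) (SL2 TYPE('k)).
              \<forall>\<sigma> \<in> carrier (alt_group n). PSL2_proj TYPE('k) (\<rho>' \<sigma>) = \<rho> \<sigma>)
         \<and> H2_Z2_nonzero (alt_group n)"
proof
  show "\<forall>\<rho> \<in> hom (alt_group n) (PSL2 TYPE('k)).
            \<exists>\<rho>' \<in> hom (alt_group n) (SL2 TYPE('k)).
              \<forall>\<sigma> \<in> carrier (alt_group n). PSL2_proj TYPE('k) (\<rho>' \<sigma>) = \<rho> \<sigma>"
    using part1[OF _ assms(2)] by blast
  show "H2_Z2_nonzero (alt_group n)"
    using part2 assms(2) by auto
qed

end
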